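(* For every instance $(A,C,k)$, the committee produced by MES completed by varying the budget and then by AV has representation ratio at least $\frac1k$ and utilitarian ratio at least $\frac{2}{\sqrt{k}}-\frac2k$. Both bounds are asymptotically tight: there is an absolute constant $K>0$ such that for infinitely many $k$ there are instances with committee size $k$ on which this procedure (for some tie-breaking) yields a committee with representation ratio at most $K/k$, and instances on which it yields a committee with utilitarian ratio at most $K/\sqrt{k}$.
   Context: An instance $(A,C,k)$ consists of a finite nonempty candidate set $C$, voters $N=\{1,\dots,n\}$, approval sets $A_i\subseteq C$, and a committee size $1\le k\le|C|$. $N_c=\{i:c\in A_i\}$. $\mathrm{sw}(W)=\sum_i|A_i\cap W|$, $\mathrm{cov}(W)=|\{i:A_i\cap W\ne\emptyset\}|$; utilitarian ratio $\mathrm{sw}(W)/\max\{\mathrm{sw}(W'):|W'|=k\}$, representation ratio $\mathrm{cov}(W)/\max\{\mathrm{cov}(W'):|W'|=k\}$. For a positive integer $k'$, MES with parameter $k'$ starts with $W=\emptyset$ and budgets $b_i=k'/n$; in each round, for each $c\notin W$ it finds $\rho\ge0$ (if any) with $\sum_{i\in N_c}\min(b_i,\rho)=1$; if none exists for any unselected candidate it outputs $W$, otherwise it adds a $c$ with minimum $\rho$ and sets $b_i\leftarrow b_i-\min(b_i,\rho)$ for $i\in N_c$. Completion by varying the budget: let $k^*$ be the smallest integer $k'\ge k$ for which MES with parameter $k'$ selects at least $k$ candidates; if it selects exactly $k$, let $W$ be that committee, otherwise let $W$ be the output of MES with parameter $k^*-1$. Finally $W$ is completed by AV: output $W\cup T$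 with $T\subseteq C\setminus W$, $|T|=k-|W|$, maximizing $\sum_{c\in T}|N_c|$. *)

theory Defs
  imports Complex_Main
begin

definition voters :: "nat \<Rightarrow> nat set" where
  "voters n = {1..n}"

definition supporters :: "(nat \<Rightarrow> 'c set) \<Rightarrow> nat \<Rightarrow> 'c \<Rightarrow> nat set" where
  "supporters A n c = {i \<in> voters n. c \<in> A i}"

definition valid_instance :: "(nat \<Rightarrow> 'c set) \<Rightarrow> 'c set \<Rightarrow> nat \<Rightarrow> nat \<Rightarrow> bool" where
  "valid_instance A C n k \<longleftrightarrow> finite C \<and> C \<noteq> {} \<and> 1 \<le> n \<and>
     (\<forall>i \<in> voters n. A i \<subseteq> C) \<and> 1 \<le> k \<and> k \<le> card C"

definition sw :: "(nat \<Rightarrow> 'c set) \<Rightarrow> nat \<Rightarrow> 'c set \<Rightarrow> nat" where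
  "sw A n W = (\<Sum>i\<in>voters n. card (A i \<inter> W))"

definition cov :: "(nat \<Rightarrow> 'c set) \<Rightarrow> nat \<Rightarrow> 'c set \<Rightarrow> nat" where
  "cov A n W = card {i \<in> voters n. A i \<inter> W \<noteq> {}}"

definition max_sw :: "(nat \<Rightarrow> 'c set) \<Rightarrow> 'c set \<Rightarrow> nat \<Rightarrow> nat \<Rightarrow> nat" where
  "max_sw A C n k = Max {sw A n W' | W'. W' \<subseteq> C \<and> card W' = k}"

definition max_cov :: "(nat \<Rightarrow> 'c set) \<Rightarrow> 'c set \<Rightarrow> nat \<Rightarrow> nat \<Rightarrow> nat" where
  "max_cov A C n k = Max {cov A n W' | W'. W' \<subseteq> C \<and> card W' = k}"

definition util_ratio :: "(nat \<Rightarrow> 'c set) \<Rightarrow> 'c set \<Rightarrow> nat \<Rightarrow> nat \<Rightarrow> 'c set \<Rightarrow> real" where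
  "util_ratio A C n k W = real (sw A n W) / real (max_sw A C n k)"

definition repr_ratio :: "(nat \<Rightarrow> 'c set) \<Rightarrow> 'c set \<Rightarrow> nat \<Rightarrow> nat \<Rightarrow> 'c set \<Rightarrow> real" where
  "repr_ratio A C n k W = real (cov A n W) / real (max_cov A C n k)"

definition pay_sum :: "(nat \<Rightarrow> 'c set) \<Rightarrow> nat \<Rightarrow> (nat \<Rightarrow> real) \<Rightarrow> 'c \<Rightarrow> real \<Rightarrow> real" where
  "pay_sum A n b c \<rho> = (\<Sum>i\<in>supporters A n c. min (b i) \<rho>)"

definition affordable :: "(nat \<Rightarrow> 'c set) \<Rightarrow> nat \<Rightarrow> (nat \<Rightarrow> real) \<Rightarrow> 'c \<Rightarrow> bool" where
  "affordable A n b c \<longleftrightarrow> (\<exists>\<rho>\<ge>0. pay_sum A n b c \<rho> = 1)"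

definition rho :: "(nat \<Rightarrow> 'c set) \<Rightarrow> nat \<Rightarrow> (nat \<Rightarrow> real) \<Rightarrow> 'c \<Rightarrow> real" where
  "rho A n b c = Inf {\<rho>. \<rho> \<ge> 0 \<and> pay_sum A n b c \<rho> = 1}"

definition affordable_cands ::
  "(nat \<Rightarrow> 'c set) \<Rightarrow> 'c set \<Rightarrow> nat \<Rightarrow> 'c set \<Rightarrow> (nat \<Rightarrow> real) \<Rightarrow> 'c set" where
  "affordable_cands A C n W b = {c \<in> C - W. affordable A n b c}"

definition best_cands ::
  "(nat \<Rightarrow> 'c set) \<Rightarrow> 'c set \<Rightarrow> nat \<Rightarrow> 'c set \<Rightarrow> (nat \<Rightarrow> real) \<Rightarrow> 'c set" where
  "best_cands A C n W b = {c \<in> affordable_cands A C n W b.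
      \<forall>d \<in> affordable_cands A C n W b. rho A n b c \<le> rho A n b d}"

text \<open>A tie-breaking rule: given the parameter k', the current state and the nonempty set of
  tied candidates (those of minimum rho), it picks one of them.\<close>
type_synonym 'c tiebreak = "nat \<Rightarrow> 'c set \<Rightarrow> (nat \<Rightarrow> real) \<Rightarrow> 'c set \<Rightarrow> 'c"

definition valid_tiebreak :: "'c tiebreak \<Rightarrow> bool" where
  "valid_tiebreak tb \<longleftrightarrow> (\<forall>k' W b S. S \<noteq> {} \<longrightarrow> tb k' W b S \<in> S)"

definition mes_step ::
  "(nat \<Rightarrow> 'c set) \<Rightarrow> 'c set \<Rightarrow> nat \<Rightarrow> 'c tiebreak \<Rightarrow> nat \<Rightarrow>
   'c set \<times> (nat \<Rightarrow> real) \<Rightarrow> ('c set \<times> (nat \<Rightarrow> real)) option" where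
  "mes_step A C n tb k' s =
     (let W = fst s; b = snd s; S = best_cands A C n W b in
      if S = {} then None
      else (let c = tb k' W b S; r = rho A n b c in
            Some (insert c W,
                  (\<lambda>i. if i \<in> supporters A n c then b i - min (b i) r else b i))))"

fun mes_iter ::
  "(nat \<Rightarrow> 'c set) \<Rightarrow> 'c set \<Rightarrow> nat \<Rightarrow> 'c tiebreak \<Rightarrow> nat \<Rightarrow> nat \<Rightarrow>
   'c set \<times> (nat \<Rightarrow> real) \<Rightarrow> 'c set \<times> (nat \<Rightarrow> real)" where
  "mes_iter A C n tb k' 0 s = s"
| "mes_iter A C n tb k' (Suc m) s =
     (case mes_step A C n tb k' s of None \<Rightarrow> s | Some s' \<Rightarrow> mes_iter A C n tb k' m s')"

text \<open>MES with parameter k' (initial budgets k'/n). Every round adds a new candidate of C,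
  so card C rounds suffice for the procedure to terminate.\<close>
definition mes :: "(nat \<Rightarrow> 'c set) \<Rightarrow> 'c set \<Rightarrow> nat \<Rightarrow> 'c tiebreak \<Rightarrow> nat \<Rightarrow> 'c set" where
  "mes A C n tb k' = fst (mes_iter A C n tb k' (card C) ({}, (\<lambda>i. real k' / real n)))"

text \<open>If no parameter k' \<ge> k makes MES select at least k
  candidates, we take W = {} (the final AV completion then contains all approved candidates
  regardless of the choice of W).\<close>
definition mes_vb :: "(nat \<Rightarrow> 'c set) \<Rightarrow> 'c set \<Rightarrow> nat \<Rightarrow> 'c tiebreak \<Rightarrow> nat \<Rightarrow> 'c set" where
  "mes_vb A C n tb k =
     (if \<exists>k'\<ge>k. card (mes A C n tb k') \<ge> k then
        (let ks = (LEAST k'. k' \<ge> k \<and> card (mes A C n tb k') \<ge> k) in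
         if card (mes A C n tb ks) = k then mes A C n tb ks else mes A C n tb (ks - 1))
      else {})"

definition av_score :: "(nat \<Rightarrow> 'c set) \<Rightarrow> nat \<Rightarrow> 'c set \<Rightarrow> nat" where
  "av_score A n T = (\<Sum>c\<in>T. card (supporters A n c))"

definition av_completions :: "(nat \<Rightarrow> 'c set) \<Rightarrow> 'c set \<Rightarrow> nat \<Rightarrow> nat \<Rightarrow> 'c set \<Rightarrow> 'c set set" where
  "av_completions A C n k W =
     {W \<union> T | T. T \<subseteq> C - W \<and> card T = k - card W \<and>
        (\<forall>T'. T' \<subseteq> C - W \<and> card T' = k - card W \<longrightarrow> av_score A n T' \<le> av_score A n T)}"

definition mes_vb_av_outputs :: "(nat \<Rightarrow> 'c set) \<Rightarrow> 'c set \<Rightarrow> nat \<Rightarrow> nat \<Rightarrow> 'c set set" where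
  "mes_vb_av_outputs A C n k =
     (\<Union>tb \<in> {tb. valid_tiebreak tb}. av_completions A C n k (mes_vb A C n tb k))"

end

theory Submission
  imports Defs "HOL-Analysis.Elementary_Metric_Spaces"
begin


abbreviation sc :: "(nat \<Rightarrow> 'c set) \<Rightarrow> nat \<Rightarrow> 'c \<Rightarrow> nat" where
  "sc A n c \<equiv> card (supporters A n c)"

lemma supporters_sub: "supporters A n c \<subseteq> voters n"
  by (auto simp: supporters_def)

lemma finite_voters[simp]: "finite (voters n)"
  by (simp add: voters_def)

lemma finite_supporters[simp]: "finite (supporters A n c)"
  by (rule finite_subset[OF supporters_sub]) simp

lemma pay_sum_le_card: "r \<ge> 0 \<Longrightarrow> pay_sum A n b c r \<le> real (sc A n c) * r"
proof -
  assume "r \<ge> 0"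
  have "pay_sum A n b c r \<le> (\<Sum>i\<in>supporters A n c. r)"
    unfolding pay_sum_def by (intro sum_mono) auto
  then show ?thesis by simp
qed

lemma pay_sum_le_sum: "pay_sum A n b c r \<le> (\<Sum>i\<in>supporters A n c. b i)"
  unfolding pay_sum_def by (intro sum_mono) auto

lemma cont_pay_sum: "continuous_on S (\<lambda>r. pay_sum A n b c r)"
  unfolding pay_sum_def by (intro continuous_intros)

lemma rho_mem:
  assumes "affordable A n b c"
  shows "rho A n b c \<ge> 0 \<and> pay_sum A n b c (rho A n b c) = 1"
proof -
  let ?S = "{r. r \<ge> 0 \<and> pay_sum A n b c r = 1}"
  have ne: "?S \<noteq> {}" using assms unfolding affordable_def by auto
  have bdd: "bdd_below ?S" by (rule bdd_belowI[of _ 0]) auto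
  have cl: "closed ?S"
  proof -
    have "?S = {r. 0 \<le> r} \<inter> {r. pay_sum A n b c r = 1}" by auto
    moreover have "closed {r::real. 0 \<le> r}" by (intro closed_Collect_le continuous_intros)
    moreover have "closed {r. pay_sum A n b c r = 1}"
      by (intro closed_Collect_eq cont_pay_sum continuous_intros)
    ultimately show ?thesis by auto
  qed
  have "Inf ?S \<in> ?S" by (rule closed_contains_Inf[OF ne bdd cl])
  then show ?thesis unfolding rho_def by auto
qed

lemma rho_le: "r \<ge> 0 \<Longrightarrow> pay_sum A n b c r = 1 \<Longrightarrow> rho A n b c \<le> r"
  unfolding rho_def by (rule cInf_lower) (auto intro: bdd_belowI[of _ 0])

lemma affordable_iff:
  assumes "\<forall>i. b i \<ge> 0"
  shows "affordable A n b c \<longleftrightarrow> 1 \<le> (\<Sum>i\<in>supporters A n c. b i)"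
proof
  assume "affordable A n b c"
  then obtain r where "r \<ge> 0" "pay_sum A n b c r = 1" unfolding affordable_def by auto
  then show "1 \<le> (\<Sum>i\<in>supporters A n c. b i)" using pay_sum_le_sum[of A n b c r] by auto
next
  assume h: "1 \<le> (\<Sum>i\<in>supporters A n c. b i)"
  let ?M = "\<Sum>i\<in>supporters A n c. b i"
  have f0: "pay_sum A n b c 0 = 0" unfolding pay_sum_def using assms by (intro sum.neutral) (auto simp: min_def intro: antisym)
  have "pay_sum A n b c ?M = ?M" unfolding pay_sum_def
  proof (intro sum.cong refl)
    fix i assume "i \<in> supporters A n c"
    then have "b i \<le> ?M" by (intro member_le_sum) (auto simp: assms)
    then show "min (b i) ?M = b i" by simp
  qed
  then have "\<exists>x\<ge>0. x \<le> ?M \<and> pay_sum A n b c x = 1"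
    using h f0 by (intro IVT' cont_pay_sum) auto
  then show "affordable A n b c" unfolding affordable_def by auto
qed

lemma affordable_pos: "affordable A n b c \<Longrightarrow> supporters A n c \<noteq> {}"
  unfolding affordable_def pay_sum_def by auto

definition upd :: "(nat \<Rightarrow> 'c set) \<Rightarrow> nat \<Rightarrow> (nat \<Rightarrow> real) \<Rightarrow> 'c \<Rightarrow> nat \<Rightarrow> real" where
  "upd A n b d = (\<lambda>i. if i \<in> supporters A n d then b i - min (b i) (rho A n b d) else b i)"

lemma step_some:
  assumes "valid_tiebreak tb" "mes_step A C n tb k' s = Some s'"
  shows "\<exists>d. d \<in> best_cands A C n (fst s) (snd s) \<and> s' = (insert d (fst s), upd A n (snd s) d)"
proof -
  let ?S = "best_cands A C n (fst s) (snd s)"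
  have ne: "?S \<noteq> {}" using assms(2) unfolding mes_step_def Let_def by (auto split: if_splits)
  then have "tb k' (fst s) (snd s) ?S \<in> ?S" using assms(1) unfolding valid_tiebreak_def by auto
  moreover have "s' = (insert (tb k' (fst s) (snd s) ?S) (fst s), upd A n (snd s) (tb k' (fst s) (snd s) ?S))"
    using assms(2) ne unfolding mes_step_def Let_def upd_def by auto
  ultimately show ?thesis by blast
qed

lemma step_none: "mes_step A C n tb k' s = None \<longleftrightarrow> best_cands A C n (fst s) (snd s) = {}"
  unfolding mes_step_def Let_def by auto

lemma best_empty:
  assumes "finite C" "best_cands A C n W b = {}"
  shows "affordable_cands A C n W b = {}"
proof (rule ccontr)
  assume ne: "affordable_cands A C n W b \<noteq> {}"
  have fin: "finite (affordable_cands A C n W b)" using assms(1) unfolding affordable_cands_def by auto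
  obtain x where "is_arg_min (rho A n b) (\<lambda>x. x \<in> affordable_cands A C n W b) x"
    using ex_is_arg_min_if_finite[OF fin ne] by blast
  then have "x \<in> best_cands A C n W b" unfolding is_arg_min_def best_cands_def by force
  then show False using assms(2) by auto
qed

lemma best_cands_props:
  assumes "d \<in> best_cands A C n W b"
  shows "d \<in> C" "d \<notin> W" "affordable A n b d"
    "\<And>e. e \<in> C \<Longrightarrow> e \<notin> W \<Longrightarrow> affordable A n b e \<Longrightarrow> rho A n b d \<le> rho A n b e"
  using assms unfolding best_cands_def affordable_cands_def by auto

lemma iter_inv:
  assumes "P s" "\<And>s s'. P s \<Longrightarrow> mes_step A C n tb k' s = Some s' \<Longrightarrow> P s'"
  shows "P (mes_iter A C n tb k' m s)"
  using assms(1)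
proof (induction m arbitrary: s)
  case 0 then show ?case by simp
next
  case (Suc m)
  show ?case
  proof (cases "mes_step A C n tb k' s")
    case None then show ?thesis using Suc by simp
  next
    case (Some s')
    then have "P s'" using assms(2) Suc.prems by blast
    then show ?thesis using Some Suc.IH by simp
  qed
qed

lemma iter_terminal:
  assumes "valid_tiebreak tb" "finite C"
  shows "fst s \<subseteq> C \<Longrightarrow> card C - card (fst s) \<le> m \<Longrightarrow>
     best_cands A C n (fst (mes_iter A C n tb k' m s)) (snd (mes_iter A C n tb k' m s)) = {}"
proof (induction m arbitrary: s)
  case 0
  then have "fst s = C" using assms(2) by (metis card_seteq diff_is_0_eq le_zero_eq)
  then show ?case unfolding best_cands_def affordable_cands_def by simp
next
  case (Suc m)
  show ?case
  proof (cases "mes_step A C n tb k' s")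
    case None then show ?thesis using step_none[of A C n tb k' s] by simp
  next
    case (Some s')
    obtain d where d: "d \<in> best_cands A C n (fst s) (snd s)"
      "s' = (insert d (fst s), upd A n (snd s) d)" using step_some[OF assms(1) Some] by blast
    have dC: "d \<in> C" "d \<notin> fst s" using best_cands_props[OF d(1)] by auto
    have fin: "finite (fst s)" using Suc.prems(1) assms(2) by (rule finite_subset)
    have "fst s' \<subseteq> C" using d dC Suc.prems by auto
    moreover have "card (fst s') = Suc (card (fst s))" using d dC fin by simp
    ultimately have "best_cands A C n (fst (mes_iter A C n tb k' m s')) (snd (mes_iter A C n tb k' m s')) = {}"
      using Suc.IH Suc.prems by simp
    then show ?thesis using Some by simp
  qed
qed



lemma step_facts:
  assumes "valid_tiebreak tb" "mes_step A C n tb k' s = Some s'"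
  obtains d where "d \<in> C" "d \<notin> fst s" "affordable A n (snd s) d"
    "rho A n (snd s) d \<ge> 0" "pay_sum A n (snd s) d (rho A n (snd s) d) = 1"
    "\<And>e. e \<in> C \<Longrightarrow> e \<notin> fst s \<Longrightarrow> affordable A n (snd s) e \<Longrightarrow> rho A n (snd s) d \<le> rho A n (snd s) e"
    "fst s' = insert d (fst s)" "snd s' = upd A n (snd s) d"
proof -
  obtain d where d: "d \<in> best_cands A C n (fst s) (snd s)" "s' = (insert d (fst s), upd A n (snd s) d)"
    using step_some[OF assms] by blast
  note bp = best_cands_props[OF d(1)]
  show ?thesis using that[of d] bp rho_mem[OF bp(3)] d(2) by auto
qed

definition inv0 :: "(nat \<Rightarrow> 'c set) \<Rightarrow> 'c set \<Rightarrow> nat \<Rightarrow> real \<Rightarrow> 'c set \<times> (nat \<Rightarrow> real) \<Rightarrow> bool" where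
  "inv0 A C n \<beta> s \<longleftrightarrow> fst s \<subseteq> C \<and> (\<forall>i. 0 \<le> snd s i \<and> snd s i \<le> \<beta>) \<and>
     (\<forall>d\<in>fst s. 1 \<le> real (sc A n d) * \<beta>)"

lemma upd_bounds: "rho A n b d \<ge> 0 \<Longrightarrow> 0 \<le> b i \<Longrightarrow> 0 \<le> upd A n b d i \<and> upd A n b d i \<le> b i"
  unfolding upd_def by (auto simp: min_def)

lemma inv0_step:
  assumes "valid_tiebreak tb" "inv0 A C n \<beta> s" "mes_step A C n tb k' s = Some s'"
  shows "inv0 A C n \<beta> s'"
proof -
  obtain d where d: "d \<in> C" "d \<notin> fst s" "affordable A n (snd s) d"
    "rho A n (snd s) d \<ge> 0" "pay_sum A n (snd s) d (rho A n (snd s) d) = 1"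
    "fst s' = insert d (fst s)" "snd s' = upd A n (snd s) d"
    using step_facts[OF assms(1,3)] by metis
  have b: "\<forall>i. 0 \<le> snd s i \<and> snd s i \<le> \<beta>" using assms(2) unfolding inv0_def by auto
  have "1 \<le> (\<Sum>i\<in>supporters A n d. snd s i)" using pay_sum_le_sum[of A n "snd s" d "rho A n (snd s) d"] d(5) by linarith
  also have "\<dots> \<le> (\<Sum>i\<in>supporters A n d. \<beta>)" using b by (intro sum_mono) auto
  finally have "1 \<le> real (sc A n d) * \<beta>" by simp
  moreover have "\<forall>i. 0 \<le> snd s' i \<and> snd s' i \<le> \<beta>"
    using upd_bounds[OF d(4)] b d(7) by (metis order_trans)
  ultimately show ?thesis using assms(2) d unfolding inv0_def by auto
qed

definition invG :: "(nat \<Rightarrow> 'c set) \<Rightarrow> nat \<Rightarrow> real \<Rightarrow> nat set \<Rightarrow> 'c set \<times> (nat \<Rightarrow> real) \<Rightarrow> bool" where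
  "invG A n \<beta> G s \<longleftrightarrow> (\<Sum>i\<in>G. snd s i) = real (card G) * \<beta> - real (card {e\<in>fst s. supporters A n e \<subseteq> G})"

lemma invG_step:
  assumes "valid_tiebreak tb" "finite C" "finite G" "inv0 A C n \<beta> s" "invG A n \<beta> G s"
    "\<forall>e\<in>C. supporters A n e \<subseteq> G \<or> supporters A n e \<inter> G = {}"
    "mes_step A C n tb k' s = Some s'"
  shows "invG A n \<beta> G s'"
proof -
  obtain d where d: "d \<in> C" "d \<notin> fst s" "affordable A n (snd s) d"
    "rho A n (snd s) d \<ge> 0" "pay_sum A n (snd s) d (rho A n (snd s) d) = 1"
    "fst s' = insert d (fst s)" "snd s' = upd A n (snd s) d"
    using step_facts[OF assms(1,7)] by metis
  define b where "b = snd s"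
  define r where "r = rho A n b d"
  define W where "W = fst s"
  have finW: "finite W" using assms(2,4) unfolding inv0_def W_def by (metis finite_subset)
  have ne: "supporters A n d \<noteq> {}" using affordable_pos d(3) by metis
  have "(\<Sum>i\<in>G. snd s' i) = (\<Sum>i\<in>G. b i - (if i \<in> supporters A n d then min (b i) r else 0))"
    unfolding d(7) upd_def b_def r_def by (intro sum.cong) auto
  also have "\<dots> = (\<Sum>i\<in>G. b i) - (\<Sum>i\<in>G \<inter> supporters A n d. min (b i) r)"
    by (simp add: sum_subtractf sum.inter_restrict[OF assms(3)])
  finally have eq: "(\<Sum>i\<in>G. snd s' i) = (\<Sum>i\<in>G. b i) - (\<Sum>i\<in>G \<inter> supporters A n d. min (b i) r)" .
  show ?thesis
  proof (cases "supporters A n d \<subseteq> G")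
    case True
    then have "G \<inter> supporters A n d = supporters A n d" by auto
    then have "(\<Sum>i\<in>G. snd s' i) = (\<Sum>i\<in>G. b i) - 1"
      using eq d(5) unfolding pay_sum_def b_def r_def by simp
    moreover have "{e\<in>fst s'. supporters A n e \<subseteq> G} = insert d {e\<in>W. supporters A n e \<subseteq> G}"
      using True d(6) W_def by auto
    moreover have "card (insert d {e\<in>W. supporters A n e \<subseteq> G}) = Suc (card {e\<in>W. supporters A n e \<subseteq> G})"
      using finW d(2) W_def by simp
    ultimately show ?thesis using assms(5) unfolding invG_def b_def W_def by simp
  next
    case False
    then have "G \<inter> supporters A n d = {}" using assms(6) d(1) by auto
    then have "(\<Sum>i\<in>G. snd s' i) = (\<Sum>i\<in>G. b i)" using eq by simp
    moreover have "{e\<in>fst s'. supporters A n e \<subseteq> G} = {e\<in>W. supporters A n e \<subseteq> G}"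
      using False d(6) W_def by auto
    ultimately show ?thesis using assms(5) unfolding invG_def b_def W_def by simp
  qed
qed

definition keyinv :: "(nat \<Rightarrow> 'c set) \<Rightarrow> nat \<Rightarrow> real \<Rightarrow> 'c \<Rightarrow> 'c set \<times> (nat \<Rightarrow> real) \<Rightarrow> bool" where
  "keyinv A n \<beta> c s \<longleftrightarrow> c \<in> fst s \<or>
     real (card {d\<in>fst s. sc A n c \<le> sc A n d}) > real (sc A n c) * \<beta> - 1 \<or>
     ((\<forall>d\<in>fst s. sc A n c \<le> sc A n d) \<and>
      (\<forall>i\<in>supporters A n c. snd s i \<ge> \<beta> - real (card {d\<in>fst s. i \<in> supporters A n d}) / real (sc A n c)))"

lemma aux_mul: "(x::real) > 0 \<Longrightarrow> x * (b - m / x) = x * b - m"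
  by (simp add: field_simps)

lemma aux_one: "(x::real) > 0 \<Longrightarrow> x * (1 / x) = 1"
  by simp

lemma key_low:
  assumes "finite W" "sc A n c \<ge> 1" "\<forall>d\<in>W. sc A n c \<le> sc A n d"
    "i \<in> supporters A n c" "b i \<ge> \<beta> - real (card {d\<in>W. i \<in> supporters A n d}) / real (sc A n c)"
    "b i < 1 / real (sc A n c)"
  shows "real (card {d\<in>W. sc A n c \<le> sc A n d}) > real (sc A n c) * \<beta> - 1"
proof -
  let ?s = "real (sc A n c)"
  let ?m = "real (card {d\<in>W. i \<in> supporters A n d})"
  have sp: "?s > 0" using assms(2) by simp
  have "\<beta> - ?m / ?s < 1 / ?s" using assms(5,6) by linarith
  then have h1: "?s * (\<beta> - ?m / ?s) < ?s * (1 / ?s)" using sp by (intro mult_strict_left_mono)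
  have h2: "?s * (\<beta> - ?m / ?s) = ?s * \<beta> - ?m" using sp by (rule aux_mul)
  have h3: "?s * (1 / ?s) = 1" using sp by (rule aux_one)
  from h1 h2 h3 have "?s * \<beta> - ?m < 1" by linarith
  moreover have "card {d\<in>W. i \<in> supporters A n d} \<le> card {d\<in>W. sc A n c \<le> sc A n d}"
    using assms(1,3) by (intro card_mono) auto
  ultimately show ?thesis by (smt (verit) of_nat_le_iff)
qed

lemma keyinv_step:
  assumes "valid_tiebreak tb" "finite C" "c \<in> C" "sc A n c \<ge> 1" "inv0 A C n \<beta> s" "keyinv A n \<beta> c s"
    "mes_step A C n tb k' s = Some s'"
  shows "keyinv A n \<beta> c s'"
proof -
  obtain d where d: "d \<in> C" "d \<notin> fst s" "affordable A n (snd s) d"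
    "rho A n (snd s) d \<ge> 0" "pay_sum A n (snd s) d (rho A n (snd s) d) = 1"
    "\<And>e. e \<in> C \<Longrightarrow> e \<notin> fst s \<Longrightarrow> affordable A n (snd s) e \<Longrightarrow> rho A n (snd s) d \<le> rho A n (snd s) e"
    "fst s' = insert d (fst s)" "snd s' = upd A n (snd s) d"
    using step_facts[OF assms(1,7)] by metis
  define b where "b = snd s"
  define W where "W = fst s"
  let ?s = "real (sc A n c)"
  have sp: "?s > 0" using assms(4) by simp
  have cne: "supporters A n c \<noteq> {}"
  proof
    assume "supporters A n c = {}" then show False using assms(4) by simp
  qed
  have finW: "finite W" using assms(2,5) unfolding inv0_def W_def by (metis finite_subset)
  have b0: "\<forall>i. 0 \<le> b i" using assms(5) unfolding inv0_def b_def by auto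
  have mono2: "card {e\<in>W. sc A n c \<le> sc A n e} \<le> card {e\<in>fst s'. sc A n c \<le> sc A n e}"
    using finW d(7) W_def by (intro card_mono) auto
  consider "c \<in> W" | "real (card {e\<in>W. sc A n c \<le> sc A n e}) > ?s * \<beta> - 1"
    | "c \<notin> W" "\<forall>e\<in>W. sc A n c \<le> sc A n e"
      "\<forall>i\<in>supporters A n c. b i \<ge> \<beta> - real (card {e\<in>W. i \<in> supporters A n e}) / ?s"
    using assms(6) unfolding keyinv_def W_def b_def by blast
  then show ?thesis
  proof cases
    case 1 then show ?thesis unfolding keyinv_def using d(7) W_def by auto
  next
    case 2 then show ?thesis unfolding keyinv_def using mono2
      by (smt (verit) of_nat_le_iff)
  next
    case 3
    show ?thesis
    proof (cases "\<exists>i\<in>supporters A n c. b i < 1 / ?s")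
      case True
      then obtain i where i: "i \<in> supporters A n c" and bl: "b i < 1 / ?s" by blast
      have hi: "b i \<ge> \<beta> - real (card {e\<in>W. i \<in> supporters A n e}) / ?s" using 3(3) i by blast
      have "real (card {e\<in>W. sc A n c \<le> sc A n e}) > ?s * \<beta> - 1"
        by (rule key_low[where b=b, OF finW assms(4) 3(2) i hi bl])
      then show ?thesis unfolding keyinv_def using mono2 by (smt (verit) of_nat_le_iff)
    next
      case False
      then have ge: "\<forall>i\<in>supporters A n c. min (b i) (1 / ?s) = 1 / ?s" by auto
      have "pay_sum A n b c (1 / ?s) = (\<Sum>i\<in>supporters A n c. 1 / ?s)"
        unfolding pay_sum_def using ge by (intro sum.cong) auto
      also have "\<dots> = 1" using sp cne by simp
      finally have ps: "pay_sum A n b c (1 / ?s) = 1" .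
      then have affc: "affordable A n b c" unfolding affordable_def using sp
        by (intro exI[of _ "1 / ?s"]) auto
      have "rho A n b c \<le> 1 / ?s" using rho_le[OF _ ps] sp by simp
      then have rd: "rho A n b d \<le> 1 / ?s" using d(6)[OF assms(3) 3(1)[unfolded W_def] affc[unfolded b_def]]
        unfolding b_def by simp
      have "1 \<le> real (sc A n d) * rho A n b d"
        using pay_sum_le_card[OF d(4), of A n "snd s" d] d(5) unfolding b_def by simp
      also have "\<dots> \<le> real (sc A n d) * (1 / ?s)" using rd by (intro mult_left_mono) auto
      finally have "?s \<le> real (sc A n d)" using sp by (simp add: field_simps)
      then have big: "\<forall>e\<in>fst s'. sc A n c \<le> sc A n e" using 3(2) d(7) W_def by auto
      have "\<forall>i\<in>supporters A n c. snd s' i \<ge> \<beta> - real (card {e\<in>fst s'. i \<in> supporters A n e}) / ?s"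
      proof
        fix i assume i: "i \<in> supporters A n c"
        have hi: "b i \<ge> \<beta> - real (card {e\<in>W. i \<in> supporters A n e}) / ?s" using 3(3) i by blast
        show "snd s' i \<ge> \<beta> - real (card {e\<in>fst s'. i \<in> supporters A n e}) / ?s"
        proof (cases "i \<in> supporters A n d")
          case True
          have "{e\<in>fst s'. i \<in> supporters A n e} = insert d {e\<in>W. i \<in> supporters A n e}"
            using True d(7) W_def by auto
          then have cn: "real (card {e\<in>fst s'. i \<in> supporters A n e}) = real (card {e\<in>W. i \<in> supporters A n e}) + 1"
            using finW d(2) W_def by simp
          have "snd s' i = b i - min (b i) (rho A n b d)" using True d(8) unfolding upd_def b_def by simp
          also have "\<dots> \<ge> b i - 1 / ?s" using rd by linarith
          finally have "snd s' i \<ge> b i - 1 / ?s" .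
          then show ?thesis using hi cn by (simp add: add_divide_distrib diff_divide_distrib)
        next
          case False
          have "{e\<in>fst s'. i \<in> supporters A n e} = {e\<in>W. i \<in> supporters A n e}"
            using False d(7) W_def by auto
          moreover have "snd s' i = b i" using False d(8) unfolding upd_def b_def by simp
          ultimately show ?thesis using hi by simp
        qed
      qed
      then show ?thesis unfolding keyinv_def using big by blast
    qed
  qed
qed



lemma sc_ne: "sc A n c \<ge> 1 \<Longrightarrow> supporters A n c \<noteq> {}"
proof
  assume "sc A n c \<ge> 1" "supporters A n c = {}" then show False by simp
qed

definition fstate :: "(nat \<Rightarrow> 'c set) \<Rightarrow> 'c set \<Rightarrow> nat \<Rightarrow> 'c tiebreak \<Rightarrow> nat \<Rightarrow> 'c set \<times> (nat \<Rightarrow> real)" where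
  "fstate A C n tb k' = mes_iter A C n tb k' (card C) ({}, (\<lambda>i. real k' / real n))"

lemma mes_fstate: "mes A C n tb k' = fst (fstate A C n tb k')"
  unfolding mes_def fstate_def by simp

lemma fstate_terminal:
  assumes "valid_tiebreak tb" "finite C"
  shows "best_cands A C n (fst (fstate A C n tb k')) (snd (fstate A C n tb k')) = {}"
  unfolding fstate_def by (rule iter_terminal[OF assms]) auto

lemma fstate_inv0:
  assumes "valid_tiebreak tb"
  shows "inv0 A C n (real k' / real n) (fstate A C n tb k')"
  unfolding fstate_def
proof (rule iter_inv)
  show "inv0 A C n (real k' / real n) ({}, \<lambda>i. real k' / real n)" unfolding inv0_def by auto
next
  fix s s' assume "inv0 A C n (real k' / real n) s" "mes_step A C n tb k' s = Some s'"
  then show "inv0 A C n (real k' / real n) s'" using inv0_step[OF assms] by blast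
qed

lemma fstate_invG:
  assumes "valid_tiebreak tb" "finite C" "finite G"
    "\<forall>e\<in>C. supporters A n e \<subseteq> G \<or> supporters A n e \<inter> G = {}"
  shows "invG A n (real k' / real n) G (fstate A C n tb k')"
proof -
  let ?P = "\<lambda>s. inv0 A C n (real k' / real n) s \<and> invG A n (real k' / real n) G s"
  have "?P (fstate A C n tb k')"
    unfolding fstate_def
  proof (rule iter_inv)
    show "?P ({}, \<lambda>i. real k' / real n)" unfolding inv0_def invG_def by auto
  next
    fix s s' assume "?P s" "mes_step A C n tb k' s = Some s'"
    then show "?P s'" using inv0_step[OF assms(1)] invG_step[OF assms(1,2,3) _ _ assms(4)] by blast
  qed
  then show ?thesis by blast
qed

lemma fstate_key:
  assumes "valid_tiebreak tb" "finite C" "c \<in> C" "sc A n c \<ge> 1"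
  shows "keyinv A n (real k' / real n) c (fstate A C n tb k')"
proof -
  let ?P = "\<lambda>s. inv0 A C n (real k' / real n) s \<and> keyinv A n (real k' / real n) c s"
  have "?P (fstate A C n tb k')"
    unfolding fstate_def
  proof (rule iter_inv)
    show "?P ({}, \<lambda>i. real k' / real n)" unfolding inv0_def keyinv_def by auto
  next
    fix s s' assume "?P s" "mes_step A C n tb k' s = Some s'"
    then show "?P s'" using inv0_step[OF assms(1)] keyinv_step[OF assms(1,2,3,4)] by blast
  qed
  then show ?thesis by blast
qed

lemma fstate_unaff:
  assumes "valid_tiebreak tb" "finite C" "c \<in> C" "c \<notin> fst (fstate A C n tb k')"
  shows "(\<Sum>i\<in>supporters A n c. snd (fstate A C n tb k') i) < 1"
proof -
  have "affordable_cands A C n (fst (fstate A C n tb k')) (snd (fstate A C n tb k')) = {}"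
    using best_empty[OF assms(2) fstate_terminal[OF assms(1,2)]] .
  then have "\<not> affordable A n (snd (fstate A C n tb k')) c"
    using assms(3,4) unfolding affordable_cands_def by auto
  moreover have "\<forall>i. 0 \<le> snd (fstate A C n tb k') i"
    using fstate_inv0[OF assms(1)] unfolding inv0_def by auto
  ultimately show ?thesis using affordable_iff by (metis not_le)
qed

lemma mes_good:
  fixes A :: "nat \<Rightarrow> 'c set" and k' :: nat
  assumes "valid_tiebreak tb" "finite C" "n \<ge> 1"
  defines "W \<equiv> mes A C n tb k'" and "\<beta> \<equiv> real k' / real n"
  shows "W \<subseteq> C" "\<forall>d\<in>W. 1 \<le> real (sc A n d) * \<beta>"
    "\<forall>c\<in>C - W. real (card {d\<in>W. sc A n c \<le> sc A n d}) > real (sc A n c) * \<beta> - 1"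
    "card W \<le> k'"
proof -
  let ?f = "fstate A C n tb k'"
  have i0: "inv0 A C n \<beta> ?f" using fstate_inv0[OF assms(1)] unfolding \<beta>_def .
  have Wf: "W = fst ?f" unfolding W_def mes_fstate ..
  show "W \<subseteq> C" "\<forall>d\<in>W. 1 \<le> real (sc A n d) * \<beta>" using i0 Wf unfolding inv0_def by auto
  have finW: "finite W" using \<open>W \<subseteq> C\<close> assms(2) by (rule finite_subset)
  show "\<forall>c\<in>C - W. real (card {d\<in>W. sc A n c \<le> sc A n d}) > real (sc A n c) * \<beta> - 1"
  proof
    fix c assume c: "c \<in> C - W"
    show "real (card {d\<in>W. sc A n c \<le> sc A n d}) > real (sc A n c) * \<beta> - 1"
    proof (cases "sc A n c \<ge> 1")
      case False
      then have z: "real (sc A n c) = 0" by linarith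
      show ?thesis unfolding z by simp
    next
      case True
      have unaff: "(\<Sum>i\<in>supporters A n c. snd ?f i) < 1"
        using fstate_unaff[OF assms(1,2)] c Wf by auto
      have "\<exists>i\<in>supporters A n c. snd ?f i < 1 / real (sc A n c)"
      proof (rule ccontr)
        assume "\<not> ?thesis"
        then have "(\<Sum>i\<in>supporters A n c. 1 / real (sc A n c)) \<le> (\<Sum>i\<in>supporters A n c. snd ?f i)"
          by (intro sum_mono) auto
        moreover have "(\<Sum>i\<in>supporters A n c. 1 / real (sc A n c)) = 1" using True sc_ne[OF True] by simp
        ultimately show False using unaff by linarith
      qed
      then obtain i where i: "i \<in> supporters A n c" and bl: "snd ?f i < 1 / real (sc A n c)" by blast
      have k: "keyinv A n \<beta> c ?f" using fstate_key[OF assms(1,2) _ True] c unfolding \<beta>_def by auto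
      show ?thesis
      proof -
        consider "c \<in> W" | "real (card {d\<in>W. sc A n c \<le> sc A n d}) > real (sc A n c) * \<beta> - 1"
          | "(\<forall>d\<in>W. sc A n c \<le> sc A n d)"
            "(\<forall>i\<in>supporters A n c. snd ?f i \<ge> \<beta> - real (card {d\<in>W. i \<in> supporters A n d}) / real (sc A n c))"
          using k Wf unfolding keyinv_def by blast
        then show ?thesis
        proof cases
          case 1 then show ?thesis using c by auto
        next
          case 2 then show ?thesis .
        next
          case 3
          have hi: "snd ?f i \<ge> \<beta> - real (card {d\<in>W. i \<in> supporters A n d}) / real (sc A n c)"
            using 3(2) i by blast
          show ?thesis by (rule key_low[where b="snd ?f", OF finW True 3(1) i hi bl])
        qed
      qed
    qed
  qed
  have "invG A n \<beta> (voters n) ?f"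
    unfolding \<beta>_def by (rule fstate_invG[OF assms(1,2) finite_voters]) (simp add: supporters_sub)
  moreover have "{e\<in>W. supporters A n e \<subseteq> voters n} = W" by (auto simp: supporters_def)
  moreover have "card (voters n) = n" by (simp add: voters_def)
  ultimately have eq: "(\<Sum>i\<in>voters n. snd ?f i) = real n * \<beta> - real (card W)"
    unfolding invG_def Wf by simp
  have "real n * \<beta> = real k'" unfolding \<beta>_def using assms(3) by simp
  moreover have "(\<Sum>i\<in>voters n. snd ?f i) \<ge> 0" using i0 unfolding inv0_def by (intro sum_nonneg) auto
  ultimately show "card W \<le> k'" using eq by simp
qed



lemma sw_eq: "finite X \<Longrightarrow> sw A n X = (\<Sum>d\<in>X. sc A n d)"
proof -
  assume fX: "finite X"
  have "sw A n X = (\<Sum>i\<in>voters n. \<Sum>d\<in>X. if d \<in> A i then 1 else 0)"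
    unfolding sw_def
  proof (intro sum.cong refl)
    fix i
    have "(\<Sum>d\<in>X. if d \<in> A i then 1 else (0::nat)) = card (X \<inter> A i)"
      using sum.inter_restrict[OF fX, of "\<lambda>_. 1::nat" "A i"] by simp
    then show "card (A i \<inter> X) = (\<Sum>d\<in>X. if d \<in> A i then 1 else 0)" by (simp add: Int_commute)
  qed
  also have "\<dots> = (\<Sum>d\<in>X. \<Sum>i\<in>voters n. if d \<in> A i then 1 else 0)" by (rule sum.swap)
  also have "\<dots> = (\<Sum>d\<in>X. sc A n d)"
  proof (intro sum.cong refl)
    fix d
    have "(\<Sum>i\<in>voters n. if i \<in> {i. d \<in> A i} then 1 else (0::nat)) = card (voters n \<inter> {i. d \<in> A i})"
      using sum.inter_restrict[OF finite_voters, where g="\<lambda>_. 1::nat" and B="{i. d \<in> A i}"] by simp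
    moreover have "voters n \<inter> {i. d \<in> A i} = supporters A n d" unfolding supporters_def by auto
    ultimately show "(\<Sum>i\<in>voters n. if d \<in> A i then 1 else 0) = sc A n d" by simp
  qed
  finally show ?thesis .
qed

lemma cov_ge: "d \<in> X \<Longrightarrow> sc A n d \<le> cov A n X"
  unfolding cov_def by (rule card_mono) (auto simp: supporters_def)

lemma cov_le: "finite X \<Longrightarrow> cov A n X \<le> (\<Sum>d\<in>X. sc A n d)"
proof -
  assume fX: "finite X"
  have "{i \<in> voters n. A i \<inter> X \<noteq> {}} = (\<Union>d\<in>X. supporters A n d)"
    unfolding supporters_def by auto
  then show ?thesis unfolding cov_def using card_UN_le[OF fX, of "supporters A n"] by simp
qed

lemma av_swap:
  assumes "T \<subseteq> C - W" "finite T" "d \<in> T" "c \<in> C - W - T"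
    "\<forall>T'. T' \<subseteq> C - W \<and> card T' = card T \<longrightarrow> av_score A n T' \<le> av_score A n T"
  shows "sc A n c \<le> sc A n d"
proof -
  let ?T' = "insert c (T - {d})"
  have "?T' \<subseteq> C - W" using assms by auto
  moreover have "card ?T' = card T"
  proof -
    have "card T > 0" using assms(2,3) card_gt_0_iff by blast
    then show ?thesis using assms by (simp add: card_Diff_singleton)
  qed
  ultimately have le: "av_score A n ?T' \<le> av_score A n T" using assms(5) by blast
  have "av_score A n ?T' = sc A n c + (\<Sum>x\<in>T - {d}. sc A n x)"
    unfolding av_score_def using assms by (subst sum.insert) auto
  moreover have "av_score A n T = sc A n d + (\<Sum>x\<in>T - {d}. sc A n x)"
    unfolding av_score_def using assms by (simp add: sum.remove)
  ultimately show ?thesis using le by simp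
qed

lemma max_le:
  assumes "finite C" "k \<le> card C" "\<forall>W'. W' \<subseteq> C \<and> card W' = k \<longrightarrow> f W' \<le> (B::nat)"
  shows "Max {f W' | W'. W' \<subseteq> C \<and> card W' = k} \<le> B"
proof -
  have fin: "finite {f W' | W'. W' \<subseteq> C \<and> card W' = k}"
  proof -
    have "{f W' | W'. W' \<subseteq> C \<and> card W' = k} \<subseteq> f ` Pow C" by auto
    then show ?thesis using assms(1) by (meson finite_Pow_iff finite_imageI finite_subset)
  qed
  obtain W0 where "W0 \<subseteq> C" "card W0 = k" using obtain_subset_with_card_n[OF assms(2)] by metis
  then have ne: "{f W' | W'. W' \<subseteq> C \<and> card W' = k} \<noteq> {}" by auto
  show ?thesis using fin ne assms(3) by (subst Max_le_iff) auto
qed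

lemma max_ge:
  assumes "finite C" "W0 \<subseteq> C" "card W0 = k"
  shows "f W0 \<le> Max {f W' | W'. W' \<subseteq> C \<and> card W' = (k::nat)}"
proof -
  have fin: "finite {f W' | W'. W' \<subseteq> C \<and> card W' = k}"
  proof -
    have "{f W' | W'. W' \<subseteq> C \<and> card W' = k} \<subseteq> f ` Pow C" by auto
    then show ?thesis using assms(1) by (meson finite_Pow_iff finite_imageI finite_subset)
  qed
  show ?thesis using assms by (intro Max_ge[OF fin]) auto
qed

lemma r_props:
  assumes "(k::nat) \<ge> 1"
  defines "r \<equiv> 2 / sqrt (real k) - 2 / real k"
  shows "0 \<le> r" "r \<le> 1" "r * real k = 2 * sqrt (real k) - 2"
proof -
  let ?u = "sqrt (real k)"
  have u1: "?u \<ge> 1" using assms(1) by simp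
  have uk: "?u * ?u = real k" by simp
  have u0: "?u \<noteq> 0" using u1 by simp
  have "r = 2 / ?u - 2 / (?u * ?u)" unfolding r_def using uk by simp
  also have "\<dots> = (2 * ?u - 2) / (?u * ?u)" using u0 by (simp add: field_simps)
  finally have r_eq: "r = (2 * ?u - 2) / (?u * ?u)" .
  have "r * (?u * ?u) = 2 * ?u - 2" unfolding r_eq using u0 by simp
  then show "r * real k = 2 * ?u - 2" using uk by simp
  show "0 \<le> r" unfolding r_eq using u1 by simp
  have e: "(?u - 1) * (?u - 1) = ?u * ?u - 2 * ?u + 1" by (simp add: algebra_simps)
  have "(?u - 1) * (?u - 1) \<ge> 0" by simp
  then have le: "2 * ?u - 2 \<le> ?u * ?u" using e by linarith
  have "?u * ?u > 0" using u1 by simp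
  then show "r \<le> 1" unfolding r_eq using le by simp
qed

lemma key_ineq:
  fixes t j k r :: real
  assumes "t \<ge> 0" "j \<ge> 0" "j \<le> k" "j > t - 1" "0 \<le> r" "r \<le> 1" "k \<ge> 1"
    "r * k = 2 * sqrt k - 2"
  shows "r * (k - j) * t \<le> (1 - r) * j * t + (k - j)"
proof (cases "r * t \<le> 1")
  case True
  have "r * (k - j) * t = (k - j) * (r * t)" by simp
  also have "\<dots> \<le> (k - j) * 1" using True assms(3) by (intro mult_left_mono) auto
  finally have "r * (k - j) * t \<le> k - j" by simp
  moreover have "(1 - r) * j * t \<ge> 0" using assms by simp
  ultimately show ?thesis by linarith
next
  case False
  have t1: "t \<ge> 1"
  proof (rule ccontr)
    assume "\<not> t \<ge> 1"
    then have "r * t \<le> 1 * 1" using assms(1,5,6) by (intro mult_mono) auto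
    then show False using False by simp
  qed
  let ?q = "sqrt k"
  have qq: "?q * ?q = k" using assms(7) by simp
  define g where "g x = (1 - r) * x * t + (k - x) - r * (k - x) * t" for x
  have "g j = g (t - 1) + (j - (t - 1)) * (t - 1)" unfolding g_def by (simp add: algebra_simps)
  moreover have "g (t - 1) = (t - ?q) * (t - ?q) + 1"
  proof -
    have "g (t - 1) = t * t - 2 * t + k + 1 - (r * k) * t" unfolding g_def by (simp add: algebra_simps)
    also have "\<dots> = t * t - 2 * t + k + 1 - (2 * ?q - 2) * t" by (simp only: assms(8))
    also have "\<dots> = t * t - 2 * t * ?q + ?q * ?q + 1" using qq by (simp add: algebra_simps)
    also have "\<dots> = (t - ?q) * (t - ?q) + 1" by (simp add: algebra_simps)
    finally show ?thesis .
  qed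
  moreover have "(j - (t - 1)) * (t - 1) \<ge> 0" using assms(4) t1 by simp
  moreover have "(t - ?q) * (t - ?q) \<ge> 0" by simp
  ultimately have "g j \<ge> 0" by linarith
  then show ?thesis unfolding g_def by simp
qed



lemma general_bounds:
  fixes A :: "nat \<Rightarrow> 'c set"
  assumes vi: "valid_instance A C n k"
    and WC: "W \<subseteq> C" and b0: "\<beta> \<ge> 0" and Wb: "\<forall>d\<in>W. 1 \<le> real (sc A n d) * \<beta>"
    and Wk: "\<forall>c\<in>C - W. real (card {d\<in>W. sc A n c \<le> sc A n d}) > real (sc A n c) * \<beta> - 1"
    and cW: "card W \<le> k"
    and Fin: "F \<in> av_completions A C n k W"
  shows "(max_cov A C n k > 0 \<longrightarrow> repr_ratio A C n k F \<ge> 1 / real k) \<and>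
         (max_sw A C n k > 0 \<longrightarrow> util_ratio A C n k F \<ge> 2 / sqrt (real k) - 2 / real k)"
proof -
  have finC: "finite C" and Cne: "C \<noteq> {}" and k1: "1 \<le> k" and kC: "k \<le> card C"
    using vi unfolding valid_instance_def by auto
  obtain T where FT: "F = W \<union> T" and TC: "T \<subseteq> C - W" and cT: "card T = k - card W"
    and maxT: "\<forall>T'. T' \<subseteq> C - W \<and> card T' = k - card W \<longrightarrow> av_score A n T' \<le> av_score A n T"
    using Fin unfolding av_completions_def by blast
  have finW: "finite W" using WC finC by (rule finite_subset)
  have finT: "finite T" using TC finC by (meson finite_Diff finite_subset)
  have finF: "finite F" using FT finW finT by simp
  have FC: "F \<subseteq> C" using FT WC TC by auto
  have cF: "card F = k" using FT card_Un_disjoint[OF finW finT] TC cW cT by auto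
  have swap: "\<And>d c. d \<in> T \<Longrightarrow> c \<in> C - W - T \<Longrightarrow> sc A n c \<le> sc A n d"
    using av_swap[OF TC finT] maxT cT by metis
  have rep: "max_cov A C n k > 0 \<longrightarrow> repr_ratio A C n k F \<ge> 1 / real k"
  proof
    assume mc0: "max_cov A C n k > 0"
    define a where "a = Max (sc A n ` C)"
    have "a \<in> sc A n ` C" unfolding a_def using finC Cne by (intro Max_in) auto
    then obtain cs where cs: "cs \<in> C" "sc A n cs = a" by auto
    have amax: "\<forall>c\<in>C. sc A n c \<le> a" unfolding a_def using finC by auto
    have "\<exists>d\<in>F. a \<le> sc A n d"
    proof (cases "cs \<in> F")
      case True then show ?thesis using cs by auto
    next
      case False
      show ?thesis
      proof (cases "T = {}")
        case False
        then obtain d where "d \<in> T" by auto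
        moreover have "cs \<in> C - W - T" using \<open>cs \<notin> F\<close> cs FT by auto
        ultimately show ?thesis using swap cs FT by fastforce
      next
        case True
        then have "card W = k" using cT cW k1 by simp
        then have "W \<noteq> {}" using k1 by auto
        then obtain d0 where d0: "d0 \<in> W" by auto
        have "1 \<le> real (sc A n d0) * \<beta>" using Wb d0 by auto
        also have "\<dots> \<le> real a * \<beta>" using amax d0 WC b0 by (intro mult_right_mono) auto
        finally have "1 \<le> real a * \<beta>" .
        moreover have "cs \<in> C - W" using \<open>cs \<notin> F\<close> cs FT by auto
        then have "real (sc A n cs) * \<beta> - 1 < real (card {d\<in>W. sc A n cs \<le> sc A n d})" using Wk by blast
        then have "real a * \<beta> - 1 < real (card {d\<in>W. a \<le> sc A n d})" using cs(2) by simp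
        ultimately have "real (card {d\<in>W. a \<le> sc A n d}) > 0" by linarith
        then have "{d\<in>W. a \<le> sc A n d} \<noteq> {}" by (metis card.empty less_irrefl of_nat_0)
        then show ?thesis using FT by auto
      qed
    qed
    then obtain d where "d \<in> F" "a \<le> sc A n d" by auto
    then have covF: "a \<le> cov A n F" using cov_ge[of d F A n] by simp
    have "max_cov A C n k \<le> k * a" unfolding max_cov_def
    proof (rule max_le[OF finC kC], intro allI impI)
      fix W' assume W': "W' \<subseteq> C \<and> card W' = k"
      then have "finite W'" using finC finite_subset by auto
      then have "cov A n W' \<le> (\<Sum>d\<in>W'. sc A n d)" by (rule cov_le)
      also have "\<dots> \<le> card W' * a" using sum_bounded_above[of W' "sc A n" a] W' amax by auto
      finally show "cov A n W' \<le> k * a" using W' by simp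
    qed
    then have "real (max_cov A C n k) \<le> real k * real (cov A n F)"
      using covF by (metis le_trans mult_le_mono2 of_nat_le_iff of_nat_mult)
    then show "repr_ratio A C n k F \<ge> 1 / real k" unfolding repr_ratio_def
      using mc0 k1 by (simp add: field_simps)
  qed
  define r where "r = 2 / sqrt (real k) - 2 / real k"
  have r0: "0 \<le> r" and r1: "r \<le> 1" and rk: "r * real k = 2 * sqrt (real k) - 2"
    using r_props[OF k1] unfolding r_def by auto
  obtain s where sF: "\<forall>c\<in>C - F. sc A n c \<le> s"
    and M: "r * real (\<Sum>d\<in>F. max (sc A n d) s) \<le> real (\<Sum>d\<in>F. sc A n d)"
  proof (cases "C - F = {}")
    case True
    have "r * real (\<Sum>d\<in>F. max (sc A n d) 0) \<le> real (\<Sum>d\<in>F. sc A n d)"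
      using r0 r1 by (simp add: mult_left_le_one_le del: of_nat_sum)
    then show ?thesis using that[of 0] True by auto
  next
    case False
    define s where "s = Max (sc A n ` (C - F))"
    have "s \<in> sc A n ` (C - F)" unfolding s_def using finC False by (intro Max_in) auto
    then obtain c where c: "c \<in> C - F" "sc A n c = s" by auto
    have smax: "\<forall>c\<in>C - F. sc A n c \<le> s" unfolding s_def using finC by auto
    define J where "J = {d\<in>F. s \<le> sc A n d}"
    have JF: "J \<subseteq> F" unfolding J_def by auto
    have finJ: "finite J" using JF finF finite_subset by auto
    have FJW: "F - J \<subseteq> W"
    proof
      fix d assume d: "d \<in> F - J"
      show "d \<in> W"
      proof (rule ccontr)
        assume "d \<notin> W"
        then have "d \<in> T" using d FT by auto
        moreover have "c \<in> C - W - T" using c FT by auto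
        ultimately have "s \<le> sc A n d" using swap c by metis
        then show False using d unfolding J_def by auto
      qed
    qed
    have sumF: "(\<Sum>d\<in>F. sc A n d) = (\<Sum>d\<in>J. sc A n d) + (\<Sum>d\<in>F - J. sc A n d)"
      using sum.subset_diff[OF JF finF] by (simp add: add.commute)
    have "(\<Sum>d\<in>F. max (sc A n d) s) = (\<Sum>d\<in>J. max (sc A n d) s) + (\<Sum>d\<in>F - J. max (sc A n d) s)"
      using sum.subset_diff[OF JF finF] by (simp add: add.commute)
    also have "(\<Sum>d\<in>J. max (sc A n d) s) = (\<Sum>d\<in>J. sc A n d)"
      unfolding J_def by (intro sum.cong) auto
    also have "(\<Sum>d\<in>F - J. max (sc A n d) s) = card (F - J) * s"
    proof -
      have "(\<Sum>d\<in>F - J. max (sc A n d) s) = (\<Sum>d\<in>F - J. s)" unfolding J_def by (intro sum.cong) auto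
      then show ?thesis by simp
    qed
    finally have sumM: "(\<Sum>d\<in>F. max (sc A n d) s) = (\<Sum>d\<in>J. sc A n d) + card (F - J) * s" .
    have cFJ: "card (F - J) = k - card J" using card_Diff_subset[OF finJ JF] cF by simp
    have cJk: "card J \<le> k" using card_mono[OF finF JF] cF by simp
    have "r * real (\<Sum>d\<in>F. max (sc A n d) s) \<le> real (\<Sum>d\<in>F. sc A n d)"
    proof (cases "F - J = {}")
      case True
      then have "(\<Sum>d\<in>F. max (sc A n d) s) = (\<Sum>d\<in>F. sc A n d)" using sumM sumF by (simp only: card.empty sum.empty)
      then show ?thesis using r0 r1 by (metis mult_left_le_one_le of_nat_0_le_iff)
    next
      case False
      then obtain d0 where d0: "d0 \<in> F - J" by auto
      then have "1 \<le> real (sc A n d0) * \<beta>" using FJW Wb by auto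
      then have bp: "\<beta> > 0" using b0 by (cases "\<beta> = 0") auto
      define X where "X = real (\<Sum>d\<in>J. sc A n d)"
      define Y where "Y = real (\<Sum>d\<in>F - J. sc A n d)"
      define j where "j = real (card J)"
      define m where "m = real (card (F - J))"
      have mj: "m = real k - j" unfolding m_def j_def using cFJ cJk by simp
      have Xj: "X \<ge> j * real s" unfolding X_def j_def
      proof -
        have "real (card J) * real s = (\<Sum>d\<in>J. real s)" by simp
        also have "\<dots> \<le> (\<Sum>d\<in>J. real (sc A n d))" unfolding J_def by (intro sum_mono) auto
        finally show "real (card J) * real s \<le> real (\<Sum>d\<in>J. sc A n d)" by simp
      qed
      have Ym: "Y \<ge> m / \<beta>" unfolding Y_def m_def
      proof -
        have "\<forall>d\<in>F - J. 1 / \<beta> \<le> real (sc A n d)"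
        proof
          fix d assume "d \<in> F - J"
          then have "1 \<le> real (sc A n d) * \<beta>" using FJW Wb by auto
          then show "1 / \<beta> \<le> real (sc A n d)" using bp by (simp add: field_simps)
        qed
        then have "(\<Sum>d\<in>F - J. 1 / \<beta>) \<le> (\<Sum>d\<in>F - J. real (sc A n d))" by (intro sum_mono) auto
        then show "real (card (F - J)) / \<beta> \<le> real (\<Sum>d\<in>F - J. sc A n d)" by simp
      qed
      have "card {d\<in>W. s \<le> sc A n d} \<le> card J"
        using FT finJ unfolding J_def by (intro card_mono) auto
      moreover have "real (card {d\<in>W. s \<le> sc A n d}) > real s * \<beta> - 1"
        using Wk c FT by auto
      ultimately have jt: "j > real s * \<beta> - 1" unfolding j_def by linarith
      define t where "t = real s * \<beta>"
      have ki: "r * (real k - j) * t \<le> (1 - r) * j * t + (real k - j)"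
        using key_ineq[of t j "real k" r] jt r0 r1 rk k1 cJk b0 unfolding t_def j_def by auto
      have "\<beta> * ((1 - r) * j * real s + m / \<beta> - r * m * real s) = (1 - r) * j * t + m - r * m * t"
        unfolding t_def using bp by (simp add: field_simps)
      also have "\<dots> \<ge> 0" using ki mj by simp
      finally have "(1 - r) * j * real s + m / \<beta> - r * m * real s \<ge> 0"
        using bp by (simp add: zero_le_mult_iff)
      moreover have "(1 - r) * X \<ge> (1 - r) * (j * real s)" using Xj r1 by (intro mult_left_mono) auto
      ultimately have "r * (X + m * real s) \<le> X + Y" using Ym by (simp add: algebra_simps)
      then show ?thesis unfolding X_def Y_def m_def using sumM sumF by simp
    qed
    then show ?thesis using that[of s] smax by auto
  qed
  have util: "max_sw A C n k > 0 \<longrightarrow> util_ratio A C n k F \<ge> 2 / sqrt (real k) - 2 / real k"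
  proof
    assume ms0: "max_sw A C n k > 0"
    have "max_sw A C n k \<le> (\<Sum>d\<in>F. max (sc A n d) s)" unfolding max_sw_def
    proof (rule max_le[OF finC kC], intro allI impI)
      fix W' assume W': "W' \<subseteq> C \<and> card W' = k"
      then have fW': "finite W'" using finC finite_subset by auto
      have "sw A n W' = (\<Sum>d\<in>W'. sc A n d)" by (rule sw_eq[OF fW'])
      also have "\<dots> = (\<Sum>d\<in>W' \<inter> F. sc A n d) + (\<Sum>d\<in>W' - F. sc A n d)" by (rule sum.Int_Diff[OF fW'])
      also have "\<dots> \<le> (\<Sum>d\<in>W' \<inter> F. max (sc A n d) s) + card (W' - F) * s"
        using W' sF sum_bounded_above[of "W' - F" "sc A n" s] by (intro add_mono sum_mono) auto
      also have "card (W' - F) = card (F - W')"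
        using card_Int_Diff[OF fW', of F] card_Int_Diff[OF finF, of W'] W' cF by (simp add: Int_commute)
      also have "card (F - W') * s \<le> (\<Sum>d\<in>F - W'. max (sc A n d) s)"
        using sum_bounded_below[of "F - W'" s "\<lambda>d. max (sc A n d) s"] by auto
      also have "(\<Sum>d\<in>W' \<inter> F. max (sc A n d) s) + (\<Sum>d\<in>F - W'. max (sc A n d) s) = (\<Sum>d\<in>F. max (sc A n d) s)"
        using sum.Int_Diff[OF finF, of "\<lambda>d. max (sc A n d) s" W'] by (simp add: Int_commute)
      finally show "sw A n W' \<le> (\<Sum>d\<in>F. max (sc A n d) s)" by simp
    qed
    then have "r * real (max_sw A C n k) \<le> r * real (\<Sum>d\<in>F. max (sc A n d) s)"
      using r0 by (intro mult_left_mono) (simp_all only: of_nat_le_iff)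
    also have "\<dots> \<le> real (sw A n F)" using M sw_eq[OF finF] by simp
    finally have "r * real (max_sw A C n k) \<le> real (sw A n F)" .
    then show "util_ratio A C n k F \<ge> 2 / sqrt (real k) - 2 / real k"
      unfolding util_ratio_def r_def[symmetric] using ms0 by (simp add: field_simps)
  qed
  show ?thesis using rep util by blast
qed



definition goodW :: "(nat \<Rightarrow> 'c set) \<Rightarrow> 'c set \<Rightarrow> nat \<Rightarrow> nat \<Rightarrow> 'c set \<Rightarrow> bool" where
  "goodW A C n k W \<longleftrightarrow> (\<exists>\<beta>. W \<subseteq> C \<and> \<beta> \<ge> 0 \<and> (\<forall>d\<in>W. 1 \<le> real (sc A n d) * \<beta>) \<and>
     (\<forall>c\<in>C - W. real (card {d\<in>W. sc A n c \<le> sc A n d}) > real (sc A n c) * \<beta> - 1) \<and> card W \<le> k)"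

lemma goodW_mes:
  assumes "valid_tiebreak tb" "valid_instance A C n k" "card (mes A C n tb k') \<le> k"
  shows "goodW A C n k (mes A C n tb k')"
proof -
  have "finite C" "n \<ge> 1" using assms(2) unfolding valid_instance_def by auto
  note g = mes_good[OF assms(1) this, of A k']
  show ?thesis unfolding goodW_def
    by (intro exI[of _ "real k' / real n"]) (use g assms(3) in auto)
qed

lemma goodW_mes_vb:
  assumes "valid_tiebreak tb" "valid_instance A C n k"
  shows "goodW A C n k (mes_vb A C n tb k)"
proof (cases "\<exists>k'\<ge>k. card (mes A C n tb k') \<ge> k")
  case False
  then show ?thesis unfolding mes_vb_def goodW_def by (intro exI[of _ 0]) auto
next
  case True
  define ks where "ks = (LEAST k'. k' \<ge> k \<and> card (mes A C n tb k') \<ge> k)"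
  have ks: "ks \<ge> k" "card (mes A C n tb ks) \<ge> k"
    using LeastI_ex[OF True[unfolded Bex_def[symmetric]]] unfolding ks_def by auto
  have n1: "n \<ge> 1" "finite C" using assms(2) unfolding valid_instance_def by auto
  have eq: "mes_vb A C n tb k = (if card (mes A C n tb ks) = k then mes A C n tb ks else mes A C n tb (ks - 1))"
    unfolding mes_vb_def ks_def using True by (simp add: Let_def)
  show ?thesis
  proof (cases "card (mes A C n tb ks) = k")
    case True
    then show ?thesis using eq goodW_mes[OF assms, of ks] by simp
  next
    case False
    have "card (mes A C n tb (ks - 1)) \<le> k"
    proof (cases "ks - 1 \<ge> k")
      case True
      have "ks - 1 < ks" using ks(1) assms(2) unfolding valid_instance_def by auto
      then have "\<not> (ks - 1 \<ge> k \<and> card (mes A C n tb (ks - 1)) \<ge> k)"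
        unfolding ks_def by (rule not_less_Least)
      then show ?thesis using True by auto
    next
      case False
      then show ?thesis using mes_good(4)[OF assms(1) n1(2) n1(1), of A "ks - 1"] by auto
    qed
    then show ?thesis using eq False goodW_mes[OF assms, of "ks - 1"] by simp
  qed
qed

theorem part1:
  fixes A :: "nat \<Rightarrow> 'c set"
  assumes "valid_instance A C n k" "W \<in> mes_vb_av_outputs A C n k"
  shows "(max_cov A C n k > 0 \<longrightarrow> repr_ratio A C n k W \<ge> 1 / real k) \<and>
         (max_sw A C n k > 0 \<longrightarrow> util_ratio A C n k W \<ge> 2 / sqrt (real k) - 2 / real k)"
proof -
  obtain tb where tb: "valid_tiebreak tb" "W \<in> av_completions A C n k (mes_vb A C n tb k)"
    using assms(2) unfolding mes_vb_av_outputs_def by auto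
  have "goodW A C n k (mes_vb A C n tb k)" by (rule goodW_mes_vb[OF tb(1) assms(1)])
  then obtain \<beta> where "mes_vb A C n tb k \<subseteq> C" "\<beta> \<ge> 0"
    "\<forall>d\<in>mes_vb A C n tb k. 1 \<le> real (sc A n d) * \<beta>"
    "\<forall>c\<in>C - mes_vb A C n tb k. real (card {d\<in>mes_vb A C n tb k. sc A n c \<le> sc A n d}) > real (sc A n c) * \<beta> - 1"
    "card (mes_vb A C n tb k) \<le> k"
    unfolding goodW_def by blast
  then show ?thesis using general_bounds[OF assms(1)] tb(2) by blast
qed



definition tb0 :: "'c tiebreak" where "tb0 = (\<lambda>k' W b S. SOME x. x \<in> S)"

lemma tb0_valid: "valid_tiebreak tb0"
  unfolding valid_tiebreak_def tb0_def by (auto intro: someI)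

lemma invG_at:
  assumes "valid_tiebreak tb" "finite C" "finite G"
    "\<forall>e\<in>C. supporters A n e \<subseteq> G \<or> supporters A n e \<inter> G = {}"
  shows "(\<Sum>i\<in>G. snd (fstate A C n tb k') i) =
    real (card G) * (real k' / real n) - real (card {e\<in>mes A C n tb k'. supporters A n e \<subseteq> G})"
  using fstate_invG[OF assms] unfolding invG_def mes_fstate .

lemma budget_nonneg: "valid_tiebreak tb \<Longrightarrow> 0 \<le> snd (fstate A C n tb k') i"
  using fstate_inv0[of tb A C n k'] unfolding inv0_def by auto

lemma unaff_at:
  assumes "valid_tiebreak tb" "finite C" "c \<in> C" "c \<notin> mes A C n tb k'"
  shows "(\<Sum>i\<in>supporters A n c. snd (fstate A C n tb k') i) < 1"
  using fstate_unaff[OF assms(1-3)] assms(4) unfolding mes_fstate by blast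

definition rA :: "nat \<Rightarrow> nat \<Rightarrow> nat set" where
  "rA k i = (if i \<le> 2 then {..<k} else {k + i})"
definition rC :: "nat \<Rightarrow> nat set" where
  "rC k = {..<k} \<union> (\<lambda>i. k + i) ` {3..k+2}"

lemma rsupp_clone: "d < k \<Longrightarrow> supporters (rA k) (k + 2) d = {1, 2}"
proof (rule set_eqI)
  fix i assume d: "d < k"
  show "i \<in> supporters (rA k) (k + 2) d \<longleftrightarrow> i \<in> {1, 2}"
  proof (cases "i \<le> 2")
    case True then show ?thesis using d unfolding supporters_def voters_def rA_def by auto
  next
    case False then show ?thesis using d unfolding supporters_def voters_def rA_def by simp
  qed
qed

lemma rsupp_single: "3 \<le> i \<Longrightarrow> supporters (rA k) (k + 2) (k + i) = (if i \<le> k + 2 then {i} else {})"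
proof (rule set_eqI)
  fix j assume i: "3 \<le> i"
  have e: "j \<in> supporters (rA k) (k + 2) (k + i) \<longleftrightarrow> 1 \<le> j \<and> j \<le> k + 2 \<and> k + i \<in> rA k j"
    by (simp add: supporters_def voters_def)
  show "j \<in> supporters (rA k) (k + 2) (k + i) \<longleftrightarrow> j \<in> (if i \<le> k + 2 then {i} else {})"
  proof (cases "j \<le> 2")
    case True
    then have "rA k j = {..<k}" unfolding rA_def by simp
    then have "k + i \<notin> rA k j" by simp
    moreover have "j \<noteq> i" using True i by linarith
    ultimately show ?thesis using e by simp
  next
    case False
    then have "rA k j = {k + j}" unfolding rA_def by simp
    then have "k + i \<in> rA k j \<longleftrightarrow> i = j" by simp
    then show ?thesis using e False i by auto
  qed
qed

lemma rC_cases: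
  assumes "e \<in> rC k"
  obtains "e < k" | i where "3 \<le> i" "i \<le> k + 2" "e = k + i"
proof -
  have "e \<in> {..<k} \<or> e \<in> (\<lambda>i. k + i) ` {3..k+2}" using assms unfolding rC_def by simp
  then show ?thesis
  proof (elim disjE)
    assume "e \<in> {..<k}" then show ?thesis using that(1) by simp
  next
    assume "e \<in> (\<lambda>i. k + i) ` {3..k+2}"
    then obtain i where "i \<in> {3..k+2}" "e = k + i" by (rule imageE)
    then show ?thesis using that(2) by simp
  qed
qed

lemma rC_finite: "finite (rC k)" unfolding rC_def by simp

lemma r_closure12: "\<forall>e\<in>rC k. supporters (rA k) (k + 2) e \<subseteq> {1, 2} \<or> supporters (rA k) (k + 2) e \<inter> {1, 2} = {}"
proof
  fix e assume "e \<in> rC k"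
  then show "supporters (rA k) (k + 2) e \<subseteq> {1, 2} \<or> supporters (rA k) (k + 2) e \<inter> {1, 2} = {}"
  proof (cases rule: rC_cases)
    case 1 then show ?thesis using rsupp_clone by auto
  next
    case (2 i) then show ?thesis using rsupp_single[of i k] by auto
  qed
qed

lemma r_closure1: "3 \<le> j \<Longrightarrow> \<forall>e\<in>rC k. supporters (rA k) (k + 2) e \<subseteq> {j} \<or> supporters (rA k) (k + 2) e \<inter> {j} = {}"
proof
  fix e assume j: "3 \<le> j" and "e \<in> rC k"
  from \<open>e \<in> rC k\<close> show "supporters (rA k) (k + 2) e \<subseteq> {j} \<or> supporters (rA k) (k + 2) e \<inter> {j} = {}"
  proof (cases rule: rC_cases)
    case 1 then show ?thesis using rsupp_clone j by auto
  next
    case (2 i) then show ?thesis using rsupp_single[of i k] by auto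
  qed
qed

lemma r_inv12: "(\<Sum>i\<in>{1,2}. snd (fstate (rA k) (rC k) (k + 2) tb0 k') i) =
   2 * (real k' / real (k + 2)) - real (card {e\<in>mes (rA k) (rC k) (k + 2) tb0 k'. supporters (rA k) (k + 2) e \<subseteq> {1,2}})"
proof -
  have "(\<Sum>i\<in>{1,2}. snd (fstate (rA k) (rC k) (k + 2) tb0 k') i) =
   real (card {1::nat,2}) * (real k' / real (k + 2)) - real (card {e\<in>mes (rA k) (rC k) (k + 2) tb0 k'. supporters (rA k) (k + 2) e \<subseteq> {1,2}})"
    by (rule invG_at[where A="rA k" and C="rC k" and n="k+2" and tb=tb0 and k'=k' and G="{1,2}",
          OF tb0_valid rC_finite _ r_closure12]) simp
  then show ?thesis by simp
qed

lemma r_inv1: "3 \<le> j \<Longrightarrow> snd (fstate (rA k) (rC k) (k + 2) tb0 k') j =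
   real k' / real (k + 2) - real (card {e\<in>mes (rA k) (rC k) (k + 2) tb0 k'. supporters (rA k) (k + 2) e \<subseteq> {j}})"
proof -
  assume j: "3 \<le> j"
  have "(\<Sum>i\<in>{j}. snd (fstate (rA k) (rC k) (k + 2) tb0 k') i) =
   real (card {j}) * (real k' / real (k + 2)) - real (card {e\<in>mes (rA k) (rC k) (k + 2) tb0 k'. supporters (rA k) (k + 2) e \<subseteq> {j}})"
    by (rule invG_at[where A="rA k" and C="rC k" and n="k+2" and tb=tb0 and k'=k' and G="{j}",
          OF tb0_valid rC_finite _ r_closure1[OF j]]) simp
  then show ?thesis by simp
qed

lemma rgood:
  "mes (rA k) (rC k) (k + 2) tb0 k' \<subseteq> rC k"
  "\<forall>d\<in>mes (rA k) (rC k) (k + 2) tb0 k'. 1 \<le> real (sc (rA k) (k + 2) d) * (real k' / real (k + 2))"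
  using mes_good[where A="rA k" and C="rC k" and n="k+2" and tb=tb0 and k'=k'] tb0_valid rC_finite by auto

lemma r_small:
  assumes "k' < k + 2"
  shows "mes (rA k) (rC k) (k + 2) tb0 k' \<subseteq> {..<k} \<and> card (mes (rA k) (rC k) (k + 2) tb0 k') \<le> 1"
proof -
  let ?W = "mes (rA k) (rC k) (k + 2) tb0 k'"
  let ?\<beta> = "real k' / real (k + 2)"
  have b1: "?\<beta> < 1" using assms by simp
  note g = rgood[of k k']
  have sub: "?W \<subseteq> {..<k}"
  proof
    fix e assume e: "e \<in> ?W"
    then have eC: "e \<in> rC k" using g(1) by auto
    have "1 \<le> real (sc (rA k) (k + 2) e) * ?\<beta>" using g(2) e by auto
    from eC show "e \<in> {..<k}"
    proof (cases rule: rC_cases)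
      case 1 then show ?thesis by auto
    next
      case (2 i)
      then have "sc (rA k) (k + 2) e = 1" using rsupp_single[of i k] by simp
      then show ?thesis using \<open>1 \<le> real (sc (rA k) (k + 2) e) * ?\<beta>\<close> b1 by simp
    qed
  qed
  have "{e\<in>?W. supporters (rA k) (k + 2) e \<subseteq> {1, 2}} = ?W"
    using sub rsupp_clone by auto
  then have eq: "(\<Sum>i\<in>{1,2}. snd (fstate (rA k) (rC k) (k + 2) tb0 k') i) = 2 * ?\<beta> - real (card ?W)"
    using r_inv12[of k k'] by simp
  have "(\<Sum>i\<in>{1::nat,2}. snd (fstate (rA k) (rC k) (k + 2) tb0 k') i) \<ge> 0"
    using budget_nonneg[OF tb0_valid] by (intro sum_nonneg) auto
  then have "real (card ?W) < 2" using eq b1 by linarith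
  then show ?thesis using sub by simp
qed

lemma r_big:
  assumes "k \<ge> 1"
  shows "card (mes (rA k) (rC k) (k + 2) tb0 (k + 2)) \<ge> k + 1"
proof -
  let ?W = "mes (rA k) (rC k) (k + 2) tb0 (k + 2)"
  let ?f = "fstate (rA k) (rC k) (k + 2) tb0 (k + 2)"
  have single: "k + i \<in> ?W" if i: "3 \<le> i" "i \<le> k + 2" for i
  proof (rule ccontr)
    assume ni: "k + i \<notin> ?W"
    have iC: "k + i \<in> rC k" unfolding rC_def using i by auto
    have "(\<Sum>j\<in>supporters (rA k) (k + 2) (k + i). snd ?f j) < 1"
      by (rule unaff_at[OF tb0_valid rC_finite iC ni])
    then have lt: "snd ?f i < 1" using rsupp_single[OF i(1)] i(2) by simp
    have "{e\<in>?W. supporters (rA k) (k + 2) e \<subseteq> {i}} = {}"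
    proof -
      { fix e assume e: "e \<in> ?W" "supporters (rA k) (k + 2) e \<subseteq> {i}"
        then have "e \<in> rC k" using rgood(1)[of k "k + 2"] by auto
        then have False
        proof (cases rule: rC_cases)
          case 1 then show ?thesis using e(2) rsupp_clone by auto
        next
          case (2 i')
          then have "supporters (rA k) (k + 2) e = {i'}" using rsupp_single[of i' k] by simp
          then show ?thesis using e ni 2 by auto
        qed }
      then show ?thesis by auto
    qed
    note E = this
    have "snd ?f i = 1 - real (card {e\<in>?W. supporters (rA k) (k + 2) e \<subseteq> {i}})"
      using r_inv1[OF i(1), of k "k + 2"] by simp
    also have "\<dots> = 1" unfolding E by simp
    finally have "snd ?f i = 1" .
    then show False using lt by simp
  qed
  have clone: "\<exists>d<k. d \<in> ?W"
  proof (rule ccontr)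
    assume "\<not> ?thesis"
    then have n0: "0 \<notin> ?W" using assms by auto
    have "0 \<in> rC k" unfolding rC_def using assms by auto
    then have "(\<Sum>j\<in>supporters (rA k) (k + 2) 0. snd ?f j) < 1"
      using unaff_at[OF tb0_valid rC_finite _ n0] by blast
    then have lt: "(\<Sum>j\<in>{1,2}. snd ?f j) < 1" using rsupp_clone[of 0 k] assms by simp
    have "{e\<in>?W. supporters (rA k) (k + 2) e \<subseteq> {1, 2}} = {}"
    proof -
      { fix e assume e: "e \<in> ?W" "supporters (rA k) (k + 2) e \<subseteq> {1, 2}"
        then have "e \<in> rC k" using rgood(1)[of k "k + 2"] by auto
        then have False
        proof (cases rule: rC_cases)
          case 1 then show ?thesis using e \<open>\<not> (\<exists>d<k. d \<in> ?W)\<close> by auto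
        next
          case (2 i')
          then have "supporters (rA k) (k + 2) e = {i'}" using rsupp_single[of i' k] by simp
          then show ?thesis using e 2 by auto
        qed }
      then show ?thesis by auto
    qed
    note E = this
    have "(\<Sum>j\<in>{1::nat,2}. snd ?f j) = 2 - real (card {e\<in>?W. supporters (rA k) (k + 2) e \<subseteq> {1, 2}})"
      using r_inv12[of k "k + 2"] by simp
    also have "\<dots> = 2" unfolding E by simp
    finally have "(\<Sum>j\<in>{1::nat,2}. snd ?f j) = 2" .
    then show False using lt by simp
  qed
  then obtain d where d: "d < k" "d \<in> ?W" by auto
  have "(\<lambda>i. k + i) ` {3..k+2} \<subseteq> ?W"
  proof
    fix x assume "x \<in> (\<lambda>i. k + i) ` {3..k+2}"
    then obtain i where "i \<in> {3..k+2}" "x = k + i" by (rule imageE)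
    then show "x \<in> ?W" using single by simp
  qed
  then have "insert d ((\<lambda>i. k + i) ` {3..k+2}) \<subseteq> ?W" using d(2) by (intro insert_subsetI)
  moreover have "finite ?W" using rgood(1)[of k "k + 2"] rC_finite
    by (rule finite_subset)
  ultimately have "card (insert d ((\<lambda>i. k + i) ` {3..k+2})) \<le> card ?W" by (rule card_mono[rotated])
  moreover have "card (insert d ((\<lambda>i. k + i) ` {3..k+2})) = k + 1"
  proof -
    have "d \<notin> (\<lambda>i. k + i) ` {3..k+2}" using d by auto
    moreover have "card ((\<lambda>i. k + i) ` {3..k+2}) = k" by (simp add: card_image)
    ultimately show ?thesis by simp
  qed
  ultimately show ?thesis by simp
qed



lemma r_sc_le2: "e \<in> rC k \<Longrightarrow> sc (rA k) (k + 2) e \<le> 2"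
proof -
  assume "e \<in> rC k"
  then show ?thesis
  proof (cases rule: rC_cases)
    case 1 then show ?thesis using rsupp_clone by simp
  next
    case (2 i) then show ?thesis using rsupp_single[of i k] by simp
  qed
qed

lemma rsupp_clone': "d < k \<Longrightarrow> supporters (rA k) (Suc (Suc k)) d = {1, 2}"
  using rsupp_clone[of d k] by simp

lemma r_img_sub: "(\<lambda>i. k + i) ` {3..k+2} \<subseteq> rC k" unfolding rC_def by blast

lemma rep_example:
  assumes k2: "k \<ge> 2"
  shows "\<exists>(A :: nat \<Rightarrow> nat set) C n W. valid_instance A C n k \<and> W \<in> mes_vb_av_outputs A C n k \<and>
                 max_cov A C n k > 0 \<and> repr_ratio A C n k W \<le> 2 / real k"
proof -
  let ?A = "rA k" and ?C = "rC k" and ?n = "k + 2"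
  have clones_sub: "{..<k} \<subseteq> ?C" unfolding rC_def by blast
  have vi: "valid_instance ?A ?C ?n k"
    unfolding valid_instance_def
  proof (intro conjI ballI)
    show "finite ?C" by (rule rC_finite)
    have "(0::nat) \<in> {..<k}" using k2 by simp
    then show "?C \<noteq> {}" using clones_sub by blast
    show "1 \<le> k + 2" by simp
    show "1 \<le> k" using k2 by simp
    show "k \<le> card ?C" using card_mono[OF rC_finite clones_sub] by simp
  next
    fix i assume i: "i \<in> voters (k + 2)"
    show "?A i \<subseteq> ?C"
    proof (cases "i \<le> 2")
      case True then show ?thesis unfolding rA_def using clones_sub by simp
    next
      case False
      then have "k + i \<in> (\<lambda>i. k + i) ` {3..k+2}" using i unfolding voters_def by auto
      then have "k + i \<in> ?C" using r_img_sub[of k] by (rule subsetD[rotated])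
      then show ?thesis unfolding rA_def using False by simp
    qed
  qed
  let ?M = "\<lambda>k'. mes ?A ?C ?n tb0 k'"
  have ex: "\<exists>k'\<ge>k. card (?M k') \<ge> k" using r_big[of k] k2 by (intro exI[of _ "k + 2"]) auto
  have least: "(LEAST k'. k' \<ge> k \<and> card (?M k') \<ge> k) = k + 2"
  proof (rule Least_equality)
    show "k \<le> k + 2 \<and> k \<le> card (?M (k + 2))" using r_big[of k] k2 by auto
  next
    fix y assume y: "k \<le> y \<and> k \<le> card (?M y)"
    show "k + 2 \<le> y"
    proof (rule ccontr)
      assume "\<not> k + 2 \<le> y"
      then have "card (?M y) \<le> 1" using r_small[of y k] by auto
      then show False using y k2 by simp
    qed
  qed
  have ne: "card (?M (k + 2)) \<noteq> k" using r_big[of k] k2 by auto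
  have vb: "mes_vb ?A ?C ?n tb0 k = ?M (k + 1)"
    unfolding mes_vb_def using ex least ne by (simp add: Let_def)
  define W1 where "W1 = ?M (k + 1)"
  have W1: "W1 \<subseteq> {..<k}" "card W1 \<le> 1" using r_small[of "k + 1" k] unfolding W1_def by auto
  have finW1: "finite W1" using W1(1) finite_subset by blast
  define T where "T = {..<k} - W1"
  have avc: "{..<k} \<in> av_completions ?A ?C ?n k W1"
    unfolding av_completions_def
  proof (intro CollectI exI[of _ T] conjI allI impI)
    show "{..<k} = W1 \<union> T" unfolding T_def using W1 by auto
    show "T \<subseteq> ?C - W1" unfolding T_def using clones_sub by auto
    show cT: "card T = k - card W1" unfolding T_def using card_Diff_subset[OF finW1 W1(1)] by simp
    fix T' assume T': "T' \<subseteq> ?C - W1 \<and> card T' = k - card W1"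
    have "av_score ?A ?n T' \<le> card T' * 2"
      unfolding av_score_def using sum_bounded_above[of T' "\<lambda>e. sc ?A ?n e" 2] T' r_sc_le2 by auto
    moreover have "av_score ?A ?n T = card T * 2"
    proof -
      have "av_score ?A ?n T = (\<Sum>e\<in>T. 2)" unfolding av_score_def T_def
      proof (intro sum.cong refl)
        fix x assume "x \<in> {..<k} - W1"
        then have "x < k" by simp
        then have "supporters ?A ?n x = {1, 2}" by (rule rsupp_clone)
        then show "sc ?A ?n x = 2" by simp
      qed
      then show ?thesis by simp
    qed
    ultimately show "av_score ?A ?n T' \<le> av_score ?A ?n T" using T' cT by simp
  qed
  have out: "{..<k} \<in> mes_vb_av_outputs ?A ?C ?n k"
    unfolding mes_vb_av_outputs_def
  proof (rule UN_I[of tb0])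
    show "tb0 \<in> {tb. valid_tiebreak tb}" using tb0_valid by simp
    show "{..<k} \<in> av_completions ?A ?C ?n k (mes_vb ?A ?C ?n tb0 k)" using avc vb W1_def by simp
  qed
  have cov2: "cov ?A ?n {..<k} \<le> 2"
  proof -
    have "{i \<in> voters ?n. ?A i \<inter> {..<k} \<noteq> {}} \<subseteq> {1, 2}"
    proof
      fix i assume i: "i \<in> {i \<in> voters ?n. ?A i \<inter> {..<k} \<noteq> {}}"
      show "i \<in> {1, 2}"
      proof (cases "i \<le> 2")
        case True then show ?thesis using i unfolding voters_def by auto
      next
        case False
        then have "?A i \<inter> {..<k} = {}" unfolding rA_def by simp
        then show ?thesis using i by simp
      qed
    qed
    then have "cov ?A ?n {..<k} \<le> card {1::nat, 2}" unfolding cov_def by (intro card_mono) auto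
    then show ?thesis by simp
  qed
  define W0 where "W0 = insert 0 ((\<lambda>i. k + i) ` {3..k+1})"
  have W0C: "W0 \<subseteq> ?C" unfolding W0_def rC_def using k2 by auto
  have cW0: "card W0 = k"
  proof -
    have "0 \<notin> (\<lambda>i. k + i) ` {3..k+1}" by auto
    moreover have "card ((\<lambda>i. k + i) ` {3..k+1}) = k - 1" by (simp add: card_image)
    ultimately show ?thesis unfolding W0_def using k2 by simp
  qed
  have "{1..k+1} \<subseteq> {i \<in> voters ?n. ?A i \<inter> W0 \<noteq> {}}"
  proof
    fix i assume i: "i \<in> {1..k+1}"
    show "i \<in> {i \<in> voters ?n. ?A i \<inter> W0 \<noteq> {}}"
    proof (cases "i \<le> 2")
      case True
      then have "0 \<in> ?A i \<inter> W0" unfolding rA_def W0_def using k2 by auto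
      then show ?thesis using i unfolding voters_def by auto
    next
      case False
      then have "k + i \<in> (\<lambda>i. k + i) ` {3..k+1}" using i by auto
      then have "k + i \<in> ?A i \<inter> W0" unfolding rA_def W0_def using False by auto
      then show ?thesis using i unfolding voters_def by auto
    qed
  qed
  then have "k + 1 \<le> cov ?A ?n W0" unfolding cov_def
    using card_mono[of "{i \<in> voters ?n. ?A i \<inter> W0 \<noteq> {}}" "{1..k+1}"] by (simp add: voters_def)
  also have "\<dots> \<le> max_cov ?A ?C ?n k" unfolding max_cov_def by (rule max_ge[OF rC_finite W0C cW0])
  finally have mc: "k + 1 \<le> max_cov ?A ?C ?n k" .
  have "repr_ratio ?A ?C ?n k {..<k} \<le> 2 / real k"
  proof -
    have p: "real (max_cov ?A ?C ?n k) \<ge> real k + 1" using mc by linarith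
    have "repr_ratio ?A ?C ?n k {..<k} = real (cov ?A ?n {..<k}) / real (max_cov ?A ?C ?n k)"
      unfolding repr_ratio_def ..
    also have "\<dots> \<le> 2 / real (max_cov ?A ?C ?n k)"
      using cov2 p by (intro divide_right_mono) auto
    also have "\<dots> \<le> 2 / real k" using p k2 by (intro divide_left_mono) auto
    finally show ?thesis .
  qed
  then show ?thesis using vi out mc by (intro exI[of _ ?A] exI[of _ ?C] exI[of _ ?n] exI[of _ "{..<k}"]) auto
qed



definition uA :: "nat \<Rightarrow> nat \<Rightarrow> nat set" where
  "uA m i = (if i \<le> m then {..<m*m} else {m*m + i})"
definition uC :: "nat \<Rightarrow> nat set" where
  "uC m = {..<m*m} \<union> (\<lambda>i. m*m + i) ` {m+1..m*m}"

lemma uC_finite: "finite (uC m)" unfolding uC_def by simp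

lemma uC_cases:
  assumes "e \<in> uC m"
  obtains "e < m*m" | i where "m + 1 \<le> i" "i \<le> m*m" "e = m*m + i"
proof -
  have "e \<in> {..<m*m} \<or> e \<in> (\<lambda>i. m*m + i) ` {m+1..m*m}" using assms unfolding uC_def by simp
  then show ?thesis
  proof (elim disjE)
    assume "e \<in> {..<m*m}" then show ?thesis using that(1) by simp
  next
    assume "e \<in> (\<lambda>i. m*m + i) ` {m+1..m*m}"
    then obtain i where "i \<in> {m+1..m*m}" "e = m*m + i" by (rule imageE)
    then show ?thesis using that(2) by simp
  qed
qed

lemma usupp_clone:
  assumes "d < m*m" "m \<ge> 1"
  shows "supporters (uA m) (m*m) d = {1..m}"
proof (rule set_eqI)
  fix i
  have mm: "m \<le> m*m" using assms(2) by simp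
  have e: "i \<in> supporters (uA m) (m*m) d \<longleftrightarrow> 1 \<le> i \<and> i \<le> m*m \<and> d \<in> uA m i"
    by (simp add: supporters_def voters_def)
  show "i \<in> supporters (uA m) (m*m) d \<longleftrightarrow> i \<in> {1..m}"
  proof (cases "i \<le> m")
    case True
    then have "uA m i = {..<m*m}" unfolding uA_def by simp
    then show ?thesis using e True assms(1) mm by auto
  next
    case False
    then have "uA m i = {m*m + i}" unfolding uA_def by simp
    then have "d \<notin> uA m i" using assms(1) by simp
    then show ?thesis using e False by simp
  qed
qed

lemma usupp_single:
  assumes "m + 1 \<le> i"
  shows "supporters (uA m) (m*m) (m*m + i) = (if i \<le> m*m then {i} else {})"
proof (rule set_eqI)
  fix j
  have e: "j \<in> supporters (uA m) (m*m) (m*m + i) \<longleftrightarrow> 1 \<le> j \<and> j \<le> m*m \<and> m*m + i \<in> uA m j"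
    by (simp add: supporters_def voters_def)
  show "j \<in> supporters (uA m) (m*m) (m*m + i) \<longleftrightarrow> j \<in> (if i \<le> m*m then {i} else {})"
  proof (cases "j \<le> m")
    case True
    then have "uA m j = {..<m*m}" unfolding uA_def by simp
    then have "m*m + i \<notin> uA m j" by simp
    moreover have "j \<noteq> i" using True assms by linarith
    ultimately show ?thesis using e by simp
  next
    case False
    then have "uA m j = {m*m + j}" unfolding uA_def by simp
    then have "m*m + i \<in> uA m j \<longleftrightarrow> i = j" by simp
    then show ?thesis using e False assms by auto
  qed
qed

lemma u_closureM:
  assumes "m \<ge> 1"
  shows "\<forall>e\<in>uC m. supporters (uA m) (m*m) e \<subseteq> {1..m} \<or> supporters (uA m) (m*m) e \<inter> {1..m} = {}"
proof
  fix e assume "e \<in> uC m"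
  then show "supporters (uA m) (m*m) e \<subseteq> {1..m} \<or> supporters (uA m) (m*m) e \<inter> {1..m} = {}"
  proof (cases rule: uC_cases)
    case 1 then show ?thesis using usupp_clone[OF _ assms] by auto
  next
    case (2 i) then show ?thesis using usupp_single[of m i] by auto
  qed
qed

lemma u_closure1:
  assumes "m + 1 \<le> j" "m \<ge> 1"
  shows "\<forall>e\<in>uC m. supporters (uA m) (m*m) e \<subseteq> {j} \<or> supporters (uA m) (m*m) e \<inter> {j} = {}"
proof
  fix e assume "e \<in> uC m"
  then show "supporters (uA m) (m*m) e \<subseteq> {j} \<or> supporters (uA m) (m*m) e \<inter> {j} = {}"
  proof (cases rule: uC_cases)
    case 1 then show ?thesis using usupp_clone[OF _ assms(2)] assms(1) by auto
  next
    case (2 i) then show ?thesis using usupp_single[of m i] by auto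
  qed
qed

lemma u_invM:
  assumes "m \<ge> 1"
  shows "(\<Sum>i\<in>{1..m}. snd (fstate (uA m) (uC m) (m*m) tb0 (m*m)) i) =
   real m - real (card {e\<in>mes (uA m) (uC m) (m*m) tb0 (m*m). supporters (uA m) (m*m) e \<subseteq> {1..m}})"
proof -
  have "(\<Sum>i\<in>{1..m}. snd (fstate (uA m) (uC m) (m*m) tb0 (m*m)) i) =
   real (card {1..m}) * (real (m*m) / real (m*m)) - real (card {e\<in>mes (uA m) (uC m) (m*m) tb0 (m*m). supporters (uA m) (m*m) e \<subseteq> {1..m}})"
    by (rule invG_at[where A="uA m" and C="uC m" and n="m*m" and tb=tb0 and k'="m*m" and G="{1..m}",
          OF tb0_valid uC_finite _ u_closureM[OF assms]]) simp
  then show ?thesis using assms by simp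
qed

lemma u_inv1:
  assumes "m + 1 \<le> j" "m \<ge> 1"
  shows "snd (fstate (uA m) (uC m) (m*m) tb0 (m*m)) j =
   1 - real (card {e\<in>mes (uA m) (uC m) (m*m) tb0 (m*m). supporters (uA m) (m*m) e \<subseteq> {j}})"
proof -
  have "(\<Sum>i\<in>{j}. snd (fstate (uA m) (uC m) (m*m) tb0 (m*m)) i) =
   real (card {j}) * (real (m*m) / real (m*m)) - real (card {e\<in>mes (uA m) (uC m) (m*m) tb0 (m*m). supporters (uA m) (m*m) e \<subseteq> {j}})"
    by (rule invG_at[where A="uA m" and C="uC m" and n="m*m" and tb=tb0 and k'="m*m" and G="{j}",
          OF tb0_valid uC_finite _ u_closure1[OF assms]]) simp
  then show ?thesis using assms by simp
qed

lemma ugood: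
  assumes "m \<ge> 1"
  shows "mes (uA m) (uC m) (m*m) tb0 (m*m) \<subseteq> uC m" "card (mes (uA m) (uC m) (m*m) tb0 (m*m)) \<le> m*m"
proof -
  have "1 \<le> m * m" using assms by simp
  then show "mes (uA m) (uC m) (m*m) tb0 (m*m) \<subseteq> uC m" "card (mes (uA m) (uC m) (m*m) tb0 (m*m)) \<le> m*m"
    using mes_good[where A="uA m" and C="uC m" and n="m*m" and tb=tb0 and k'="m*m"] tb0_valid uC_finite by auto
qed



lemma u_mes:
  assumes m2: "m \<ge> 2"
  defines "W \<equiv> mes (uA m) (uC m) (m*m) tb0 (m*m)" and "S \<equiv> (\<lambda>i. m*m + i) ` {m+1..m*m}"
  shows "W = (W \<inter> {..<m*m}) \<union> S" "card (W \<inter> {..<m*m}) = m" "card W = m*m" "card S = m*m - m"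
    "S \<inter> {..<m*m} = {}"
proof -
  have m1: "m \<ge> 1" using m2 by simp
  let ?f = "fstate (uA m) (uC m) (m*m) tb0 (m*m)"
  have WC: "W \<subseteq> uC m" using ugood(1)[OF m1] unfolding W_def .
  have single: "m*m + i \<in> W" if i: "m + 1 \<le> i" "i \<le> m*m" for i
  proof (rule ccontr)
    assume ni: "m*m + i \<notin> W"
    have iC: "m*m + i \<in> uC m" unfolding uC_def using i by auto
    have "(\<Sum>j\<in>supporters (uA m) (m*m) (m*m + i). snd ?f j) < 1"
      using unaff_at[OF tb0_valid uC_finite iC] ni unfolding W_def by blast
    then have lt: "snd ?f i < 1" using usupp_single[OF i(1)] i(2) by simp
    have E: "{e\<in>W. supporters (uA m) (m*m) e \<subseteq> {i}} = {}"
    proof -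
      { fix e assume e: "e \<in> W" "supporters (uA m) (m*m) e \<subseteq> {i}"
        then have "e \<in> uC m" using WC by auto
        then have False
        proof (cases rule: uC_cases)
          case 1
          then have "supporters (uA m) (m*m) e = {1..m}" using usupp_clone[OF _ m1] by simp
          moreover have "(1::nat) \<in> {1..m}" using m1 by simp
          ultimately show ?thesis using e(2) i(1) by auto
        next
          case (2 i')
          then have "supporters (uA m) (m*m) e = {i'}" using usupp_single[of m i'] by simp
          then show ?thesis using e ni 2 by auto
        qed }
      then show ?thesis by auto
    qed
    have "snd ?f i = 1 - real (card {e\<in>W. supporters (uA m) (m*m) e \<subseteq> {i}})"
      using u_inv1[OF i(1) m1] unfolding W_def by simp
    also have "\<dots> = 1" unfolding E by simp
    finally show False using lt by simp
  qed
  have SW: "S \<subseteq> W"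
  proof
    fix x assume "x \<in> S"
    then obtain i where "i \<in> {m+1..m*m}" "x = m*m + i" unfolding S_def by (rule imageE)
    then show "x \<in> W" using single by simp
  qed
  have SD: "S \<inter> {..<m*m} = {}" unfolding S_def by auto
  then show "S \<inter> {..<m*m} = {}" .
  have cS: "card S = m*m - m" unfolding S_def by (simp add: card_image)
  then show "card S = m*m - m" .
  have WS: "W = (W \<inter> {..<m*m}) \<union> S"
  proof
    show "W \<subseteq> (W \<inter> {..<m*m}) \<union> S"
    proof
      fix e assume e: "e \<in> W"
      then have "e \<in> uC m" using WC by auto
      then show "e \<in> (W \<inter> {..<m*m}) \<union> S"
      proof (cases rule: uC_cases)
        case 1 then show ?thesis using e by simp
      next
        case (2 i)
        then have "e \<in> S" unfolding S_def by auto
        then show ?thesis by simp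
      qed
    qed
    show "(W \<inter> {..<m*m}) \<union> S \<subseteq> W" using SW by auto
  qed
  then show "W = (W \<inter> {..<m*m}) \<union> S" .
  have finW: "finite W" using WC uC_finite by (rule finite_subset)
  have finS: "finite S" unfolding S_def by simp
  have cW: "card W = card (W \<inter> {..<m*m}) + card S"
  proof -
    have "card ((W \<inter> {..<m*m}) \<union> S) = card (W \<inter> {..<m*m}) + card S"
      by (rule card_Un_disjoint) (use finW finS SD in auto)
    then show ?thesis using WS by simp
  qed
  have cle: "card W \<le> m*m" using ugood(2)[OF m1] unfolding W_def .
  have cge: "card (W \<inter> {..<m*m}) \<ge> m"
  proof (cases "{..<m*m} \<subseteq> W")
    case True
    then have "W \<inter> {..<m*m} = {..<m*m}" by auto
    then show ?thesis by simp
  next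
    case False
    then obtain d where d: "d < m*m" "d \<notin> W" by auto
    have dC: "d \<in> uC m" unfolding uC_def using d by simp
    have "(\<Sum>j\<in>supporters (uA m) (m*m) d. snd ?f j) < 1"
      using unaff_at[OF tb0_valid uC_finite dC] d(2) unfolding W_def by blast
    then have lt: "(\<Sum>j\<in>{1..m}. snd ?f j) < 1" using usupp_clone[OF d(1) m1] by simp
    have E: "{e\<in>W. supporters (uA m) (m*m) e \<subseteq> {1..m}} = W \<inter> {..<m*m}"
    proof
      show "{e\<in>W. supporters (uA m) (m*m) e \<subseteq> {1..m}} \<subseteq> W \<inter> {..<m*m}"
      proof
        fix e assume e: "e \<in> {e\<in>W. supporters (uA m) (m*m) e \<subseteq> {1..m}}"
        then have "e \<in> uC m" using WC by auto
        then show "e \<in> W \<inter> {..<m*m}"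
        proof (cases rule: uC_cases)
          case 1 then show ?thesis using e by simp
        next
          case (2 i')
          then have "supporters (uA m) (m*m) e = {i'}" using usupp_single[of m i'] by simp
          then show ?thesis using e 2 by auto
        qed
      qed
      show "W \<inter> {..<m*m} \<subseteq> {e\<in>W. supporters (uA m) (m*m) e \<subseteq> {1..m}}"
        using usupp_clone[OF _ m1] by auto
    qed
    have "(\<Sum>j\<in>{1..m}. snd ?f j) = real m - real (card (W \<inter> {..<m*m}))"
      using u_invM[OF m1] unfolding W_def[symmetric] E .
    then have "real m - real (card (W \<inter> {..<m*m})) < 1" using lt by simp
    then show ?thesis by linarith
  qed
  have mm: "m \<le> m*m" using m1 by simp
  show "card (W \<inter> {..<m*m}) = m" using cW cle cge cS mm by linarith
  then show "card W = m*m" using cW cS mm by simp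
qed



lemma util_example:
  assumes m2: "m \<ge> 2"
  shows "\<exists>(A :: nat \<Rightarrow> nat set) C n W. valid_instance A C n (m*m) \<and> W \<in> mes_vb_av_outputs A C n (m*m) \<and>
                 max_sw A C n (m*m) > 0 \<and> util_ratio A C n (m*m) W \<le> 2 / sqrt (real (m*m))"
proof -
  have m1: "m \<ge> 1" using m2 by simp
  let ?A = "uA m" and ?C = "uC m" and ?n = "m*m" and ?k = "m*m"
  define W where "W = mes ?A ?C ?n tb0 ?k"
  define S where "S = (\<lambda>i. m*m + i) ` {m+1..m*m}"
  note um = u_mes[OF m2, folded W_def S_def]
  have clones_sub: "{..<m*m} \<subseteq> ?C" unfolding uC_def by blast
  have S_sub: "S \<subseteq> ?C" unfolding uC_def S_def by blast
  have vi: "valid_instance ?A ?C ?n ?k"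
    unfolding valid_instance_def
  proof (intro conjI ballI)
    show "finite ?C" by (rule uC_finite)
    have "(0::nat) \<in> {..<m*m}" using m1 by simp
    then show "?C \<noteq> {}" using clones_sub by blast
    show "1 \<le> m*m" using m1 by simp
    show "1 \<le> m*m" using m1 by simp
    show "m*m \<le> card ?C" using card_mono[OF uC_finite clones_sub] by simp
  next
    fix i assume i: "i \<in> voters (m*m)"
    show "?A i \<subseteq> ?C"
    proof (cases "i \<le> m")
      case True then show ?thesis unfolding uA_def using clones_sub by simp
    next
      case False
      then have "m*m + i \<in> S" unfolding S_def using i unfolding voters_def by auto
      then have "m*m + i \<in> ?C" using S_sub by blast
      then show ?thesis unfolding uA_def using False by simp
    qed
  qed
  have ex: "\<exists>k'\<ge>?k. card (mes ?A ?C ?n tb0 k') \<ge> ?k"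
    using um(3) unfolding W_def by (intro exI[of _ "m*m"]) auto
  have least: "(LEAST k'. k' \<ge> ?k \<and> card (mes ?A ?C ?n tb0 k') \<ge> ?k) = ?k"
    by (rule Least_equality) (use um(3) W_def in auto)
  have vb: "mes_vb ?A ?C ?n tb0 ?k = W"
    unfolding mes_vb_def using ex least um(3) unfolding W_def by (simp add: Let_def)
  have finW: "finite W" using ugood(1)[OF m1] uC_finite unfolding W_def by (rule finite_subset)
  have avc: "W \<in> av_completions ?A ?C ?n ?k W"
    unfolding av_completions_def
  proof (intro CollectI exI[of _ "{}"] conjI allI impI)
    show "W = W \<union> {}" by simp
    show "{} \<subseteq> ?C - W" by simp
    show "card {} = ?k - card W" using um(3) by simp
    fix T' assume T': "T' \<subseteq> ?C - W \<and> card T' = ?k - card W"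
    have "finite T'" using T' uC_finite by (meson finite_Diff finite_subset)
    then have "T' = {}" using T' um(3) by simp
    then show "av_score ?A ?n T' \<le> av_score ?A ?n {}" by simp
  qed
  have out: "W \<in> mes_vb_av_outputs ?A ?C ?n ?k"
    unfolding mes_vb_av_outputs_def
  proof (rule UN_I[of tb0])
    show "tb0 \<in> {tb. valid_tiebreak tb}" using tb0_valid by simp
    show "W \<in> av_completions ?A ?C ?n ?k (mes_vb ?A ?C ?n tb0 ?k)" using avc vb by simp
  qed
  have finS: "finite S" unfolding S_def by simp
  have "sw ?A ?n W = (\<Sum>d\<in>W. sc ?A ?n d)" by (rule sw_eq[OF finW])
  also have "\<dots> = (\<Sum>d\<in>W \<inter> {..<m*m}. sc ?A ?n d) + (\<Sum>d\<in>S. sc ?A ?n d)"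
    by (subst um(1), rule sum.union_disjoint) (use finW finS um(5) in auto)
  also have "(\<Sum>d\<in>W \<inter> {..<m*m}. sc ?A ?n d) = (\<Sum>d\<in>W \<inter> {..<m*m}. m)"
  proof (intro sum.cong refl)
    fix d assume "d \<in> W \<inter> {..<m*m}"
    then have "d < m*m" by simp
    then show "sc ?A ?n d = m" using usupp_clone[OF _ m1] by simp
  qed
  also have "(\<Sum>d\<in>S. sc ?A ?n d) = (\<Sum>d\<in>S. 1)"
  proof (intro sum.cong refl)
    fix d assume "d \<in> S"
    then obtain i where i: "i \<in> {m+1..m*m}" "d = m*m + i" unfolding S_def by (rule imageE)
    then show "sc ?A ?n d = 1" using usupp_single[of m i] by simp
  qed
  finally have swW: "sw ?A ?n W = m * m + (m*m - m)" using um(2) um(4) by simp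
  have "sw ?A ?n {..<m*m} = (\<Sum>d\<in>{..<m*m}. sc ?A ?n d)" by (rule sw_eq) simp
  also have "\<dots> = (\<Sum>d\<in>{..<m*m}. m)"
  proof (intro sum.cong refl)
    fix d assume "d \<in> {..<m*m}"
    then have "d < m*m" by simp
    then show "sc ?A ?n d = m" using usupp_clone[OF _ m1] by simp
  qed
  finally have "sw ?A ?n {..<m*m} = m*m*m" by simp
  moreover have "sw ?A ?n {..<m*m} \<le> max_sw ?A ?C ?n ?k"
    unfolding max_sw_def by (rule max_ge[OF uC_finite clones_sub]) simp
  ultimately have ms: "m*m*m \<le> max_sw ?A ?C ?n ?k" by simp
  have pos: "max_sw ?A ?C ?n ?k > 0" using ms m1 by (metis le_trans mult_pos_pos nat_less_le not_le one_le_mult_iff zero_less_one)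
  have "util_ratio ?A ?C ?n ?k W \<le> 2 / sqrt (real (m*m))"
  proof -
    have sq: "sqrt (real (m*m)) = real m" by (simp add: real_sqrt_mult)
    have "sw ?A ?n W \<le> 2 * (m * m)" using swW by linarith
    then have a: "real (sw ?A ?n W) \<le> 2 * real m * real m" by (metis of_nat_le_iff of_nat_mult of_nat_numeral mult.assoc)
    have b: "real (max_sw ?A ?C ?n ?k) \<ge> real m * real m * real m" using ms
      by (metis of_nat_le_iff of_nat_mult)
    have mp: "real m > 0" using m1 by simp
    have "util_ratio ?A ?C ?n ?k W = real (sw ?A ?n W) / real (max_sw ?A ?C ?n ?k)"
      unfolding util_ratio_def ..
    also have "\<dots> \<le> (2 * real m * real m) / real (max_sw ?A ?C ?n ?k)"
      using a by (intro divide_right_mono) auto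
    also have "\<dots> \<le> (2 * real m * real m) / (real m * real m * real m)"
    proof (rule divide_left_mono)
      show "real m * real m * real m \<le> real (max_sw ?A ?C ?n ?k)" by (rule b)
      show "0 \<le> 2 * real m * real m" by simp
      have "real m * real m * real m > 0" using mp by simp
      moreover have "real (max_sw ?A ?C ?n ?k) > 0" using pos by simp
      ultimately show "0 < real (max_sw ?A ?C ?n ?k) * (real m * real m * real m)" by (metis mult_pos_pos)
    qed
    also have "\<dots> = 2 / real m" using mp by (simp add: field_simps)
    finally show ?thesis unfolding sq .
  qed
  then show ?thesis using vi out pos
    by (intro exI[of _ ?A] exI[of _ ?C] exI[of _ ?n] exI[of _ W]) auto
qed


theorem theorem9:
  shows "(\<forall>(A :: nat \<Rightarrow> 'c set) C n k W.
           valid_instance A C n k \<and> W \<in> mes_vb_av_outputs A C n k \<longrightarrow>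
             (max_cov A C n k > 0 \<longrightarrow> repr_ratio A C n k W \<ge> 1 / real k) \<and>
             (max_sw A C n k > 0 \<longrightarrow> util_ratio A C n k W \<ge> 2 / sqrt (real k) - 2 / real k)) \<and>
         (\<exists>K :: real. K > 0 \<and>
           infinite {k :: nat.
             (\<exists>(A :: nat \<Rightarrow> nat set) C n W. valid_instance A C n k \<and> W \<in> mes_vb_av_outputs A C n k \<and>
                 max_cov A C n k > 0 \<and> repr_ratio A C n k W \<le> K / real k) \<and>
             (\<exists>(A :: nat \<Rightarrow> nat set) C n W. valid_instance A C n k \<and> W \<in> mes_vb_av_outputs A C n k \<and>
                 max_sw A C n k > 0 \<and> util_ratio A C n k W \<le> K / sqrt (real k))})"
proof (intro conjI allI impI)
  fix A :: "nat \<Rightarrow> 'c set" and C n k W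
  assume h: "valid_instance A C n k \<and> W \<in> mes_vb_av_outputs A C n k"
  note p = part1[OF h[THEN conjunct1] h[THEN conjunct2]]
  show "max_cov A C n k > 0 \<Longrightarrow> repr_ratio A C n k W \<ge> 1 / real k" using p by blast
  show "max_sw A C n k > 0 \<Longrightarrow> util_ratio A C n k W \<ge> 2 / sqrt (real k) - 2 / real k" using p by blast
next
  show "\<exists>K :: real. K > 0 \<and>
           infinite {k :: nat.
             (\<exists>(A :: nat \<Rightarrow> nat set) C n W. valid_instance A C n k \<and> W \<in> mes_vb_av_outputs A C n k \<and>
                 max_cov A C n k > 0 \<and> repr_ratio A C n k W \<le> K / real k) \<and>
             (\<exists>(A :: nat \<Rightarrow> nat set) C n W. valid_instance A C n k \<and> W \<in> mes_vb_av_outputs A C n k \<and>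
                 max_sw A C n k > 0 \<and> util_ratio A C n k W \<le> K / sqrt (real k))}"
  proof (intro exI[of _ 2] conjI)
    show "(0::real) < 2" by simp
    show "infinite {k :: nat.
             (\<exists>(A :: nat \<Rightarrow> nat set) C n W. valid_instance A C n k \<and> W \<in> mes_vb_av_outputs A C n k \<and>
                 max_cov A C n k > 0 \<and> repr_ratio A C n k W \<le> 2 / real k) \<and>
             (\<exists>(A :: nat \<Rightarrow> nat set) C n W. valid_instance A C n k \<and> W \<in> mes_vb_av_outputs A C n k \<and>
                 max_sw A C n k > 0 \<and> util_ratio A C n k W \<le> 2 / sqrt (real k))}"
      unfolding infinite_nat_iff_unbounded_le
    proof
      fix N :: nat
      let ?m = "N + 2"
      have m2: "?m \<ge> 2" by simp
      have ge: "?m * ?m \<ge> N" by (simp add: le_trans[OF _ mult_le_mono[of N ?m 1 ?m]])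
      have k2: "?m * ?m \<ge> 2" using mult_le_mono[OF m2 m2] by simp
      show "\<exists>k\<ge>N. k \<in> {k :: nat.
             (\<exists>(A :: nat \<Rightarrow> nat set) C n W. valid_instance A C n k \<and> W \<in> mes_vb_av_outputs A C n k \<and>
                 max_cov A C n k > 0 \<and> repr_ratio A C n k W \<le> 2 / real k) \<and>
             (\<exists>(A :: nat \<Rightarrow> nat set) C n W. valid_instance A C n k \<and> W \<in> mes_vb_av_outputs A C n k \<and>
                 max_sw A C n k > 0 \<and> util_ratio A C n k W \<le> 2 / sqrt (real k))}"
        using ge rep_example[OF k2] util_example[OF m2] by blast
    qed
  qed
qed

end
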